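(* Let $L=2U\oplus\langle-6\rangle\oplus\langle-2\rangle$ and let $G$ be either $\widetilde{\operatorname{O}}^+(L)$ or $\operatorname{O}^+(L)$. Then there are exactly two $G$-orbits of isotropic lines in $L\otimes\mathbb{Q}$ and exactly two $G$-orbits of totally isotropic planes in $L\otimes\mathbb{Q}$ (in particular each $\operatorname{O}^+(L)$-orbit of such subspaces is a single $\widetilde{\operatorname{O}}^+(L)$-orbit), and the Tits' building $\mathcal{B}(G)$ is a path with four nodes: labelling the line orbits $[\ell_0],[\ell_1]$ and the plane orbits $[\Pi_0],[\Pi_1]$ suitably, the edges are exactly $[\Pi_0]$—$[\ell_0]$, $[\ell_0]$—$[\Pi_1]$ and $[\Pi_1]$—$[\ell_1]$.
   Context: $U$ is the hyperbolic plane, $\langle d\rangle$ the rank-one lattice generated by a vector of square $d$; $L$ has signature $(2,4)$. $\widetilde{\operatorname{O}}(L)$ is the kernel of $\operatorname{O}(L)\to\operatorname{O}(L^{\vee}/L)$; the real spinor norm of a product of reflections $\sigma_{w_1}\cdots\sigma_{w_m}$ (with $\sigma_w(x)=x-\frac{2(x,w)}{(w,w)}w$) is $\prod_i(-(w_i,w_i)/2)\in\mathbb{R}^*/(\mathbb{R}^* )^2$, and a superscript $+$ denotes the subgroup of spinor norm $1$. For $G\subset\operatorname{O}^+(L\otimes\mathbb{Q})$, the Tits' building $\mathcal{B}(G)$ is the bipartite graph whose nodes are the $G$-orbits of isotropic lines and the $G$-orbits of totally isotropic planes in $L\otimes\mathbb{Q}$, with an edge between the orbit of a line $\ell$ and the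 orbit of a plane $\Pi$ iff $g\ell\subset\Pi$ for some $g\in G$. *)

theory Defs
  imports "HOL-Analysis.Analysis"
begin

text \<open>The lattice L = 2U + <-6> + <-2> is Z^6 (inside Q^6 = L tensor Q) with the
  bilinear form below; coordinates 0,1 and 2,3 are the two hyperbolic planes,
  coordinate 4 spans <-6>, coordinate 5 spans <-2>.\<close>

definition lform :: "'a::comm_ring_1 ^ 6 \<Rightarrow> 'a ^ 6 \<Rightarrow> 'a" where
  "lform x y = x$0 * y$1 + x$1 * y$0 + x$2 * y$3 + x$3 * y$2
              - 6 * x$4 * y$4 - 2 * x$5 * y$5"

definition latL :: "(rat ^ 6) set" where
  "latL = {x. \<forall>i. x$i \<in> \<int>}"

definition dualL :: "(rat ^ 6) set" where
  "dualL = {x. \<forall>y\<in>latL. lform x y \<in> \<int>}"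

definition int_mat :: "rat ^ 6 ^ 6 \<Rightarrow> bool" where
  "int_mat M \<longleftrightarrow> (\<forall>i j. M$i$j \<in> \<int>)"

definition OL :: "(rat ^ 6 ^ 6) set" where
  "OL = {M. int_mat M \<and> (\<exists>N. int_mat N \<and> M ** N = mat 1 \<and> N ** M = mat 1)
            \<and> (\<forall>x y. lform (M *v x) (M *v y) = lform x y)}"

text \<open>Stable orthogonal group: kernel of O(L) -> O(L^dual / L).\<close>
definition OtL :: "(rat ^ 6 ^ 6) set" where
  "OtL = {M \<in> OL. \<forall>x\<in>dualL. M *v x - x \<in> latL}"

definition reflR :: "real ^ 6 \<Rightarrow> real ^ 6 \<Rightarrow> real ^ 6" where
  "reflR w x = x - (2 * lform x w / lform w w) *s w"

text \<open>Real spinor norm equal to 1: g = sigma_{w_1} ... sigma_{w_m} with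
  prod (-(w_i,w_i)/2) positive (the spinor norm is well defined).\<close>
definition spinor_one :: "real ^ 6 ^ 6 \<Rightarrow> bool" where
  "spinor_one R \<longleftrightarrow> (\<exists>ws. (\<forall>w\<in>set ws. lform w w \<noteq> 0)
      \<and> (\<lambda>x. R *v x) = foldr (\<lambda>w f. reflR w \<circ> f) ws id
      \<and> (\<Prod>w\<leftarrow>ws. - lform w w / 2) > 0)"

definition realify :: "rat ^ 6 ^ 6 \<Rightarrow> real ^ 6 ^ 6" where
  "realify M = (\<chi> i j. of_rat (M$i$j))"

definition OplusL :: "(rat ^ 6 ^ 6) set" where
  "OplusL = {M \<in> OL. spinor_one (realify M)}"

definition OtplusL :: "(rat ^ 6 ^ 6) set" where
  "OtplusL = {M \<in> OtL. spinor_one (realify M)}"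

definition tiso :: "nat \<Rightarrow> (rat ^ 6) set \<Rightarrow> bool" where
  "tiso k S \<longleftrightarrow> vec.subspace S \<and> vec.dim S = k \<and> (\<forall>x\<in>S. \<forall>y\<in>S. lform x y = 0)"

definition orbit :: "(rat ^ 6 ^ 6) set \<Rightarrow> (rat ^ 6) set \<Rightarrow> (rat ^ 6) set set" where
  "orbit G S = {(\<lambda>x. M *v x) ` S | M. M \<in> G}"

text \<open>Edge in the Tits building between the orbit of a line and that of a plane.\<close>
definition bedge :: "(rat ^ 6 ^ 6) set \<Rightarrow> (rat ^ 6) set \<Rightarrow> (rat ^ 6) set \<Rightarrow> bool" where
  "bedge G l P \<longleftrightarrow> (\<exists>M\<in>G. (\<lambda>x. M *v x) ` l \<subseteq> P)"

end

theory Submission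
  imports Defs
begin



lemma UNIV6: "(UNIV::6 set) = {0,1,2,3,4,5}"
proof -
  have c: "card {0,1,2,3,4,5::6} = 6" by simp
  have d: "card (UNIV::6 set) = 6" by simp
  show ?thesis using card_subset_eq[of "UNIV::6 set" "{0,1,2,3,4,5}"] c d by simp
qed

lemma all6: "(\<forall>i::6. P i) \<longleftrightarrow> P 0 \<and> P 1 \<and> P 2 \<and> P 3 \<and> P 4 \<and> P 5"
  by (metis UNIV6 UNIV_I insertE singletonD)

lemma vec6_eq: "(x::'a^6) = y \<longleftrightarrow> x$0 = y$0 \<and> x$1 = y$1 \<and> x$2 = y$2 \<and> x$3 = y$3 \<and> x$4 = y$4 \<and> x$5 = y$5"
  by (simp add: vec_eq_iff all6)

lemma sum6: "sum f (UNIV::6 set) = f 0 + f 1 + f 2 + f 3 + f 4 + f 5"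
  unfolding UNIV6 by (simp add: add.assoc)

definition v6 :: "'a::zero \<Rightarrow> 'a \<Rightarrow> 'a \<Rightarrow> 'a \<Rightarrow> 'a \<Rightarrow> 'a \<Rightarrow> 'a^6" where
  "v6 a b c d p q = (\<chi> i. if i = 0 then a else if i = 1 then b else if i = 2 then c else
      if i = 3 then d else if i = 4 then p else q)"

lemma v6_nth[simp]: "v6 a b c d p q $ 0 = a" "v6 a b c d p q $ 1 = b" "v6 a b c d p q $ 2 = c"
  "v6 a b c d p q $ 3 = d" "v6 a b c d p q $ 4 = p" "v6 a b c d p q $ 5 = q"
  by (simp_all add: v6_def)

lemma v6_expand: "x = v6 (x$0) (x$1) (x$2) (x$3) (x$4) (x$5)"
  by (simp add: vec6_eq)

lemma v6_eq_iff[simp]: "v6 a b c d p q = v6 a' b' c' d' p' q' \<longleftrightarrow> a=a' \<and> b=b' \<and> c=c' \<and> d=d' \<and> p=p' \<and> q=q'"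
  by (simp add: vec6_eq)

lemma v6_add[simp]: "v6 a b c d p q + v6 a' b' c' d' p' q' = v6 (a+a') (b+b') (c+c') (d+d') (p+p') (q+q')"
  by (simp add: vec6_eq)
lemma v6_diff[simp]: "v6 a b c d p q - v6 a' b' c' d' p' q' = v6 (a-a') (b-b') (c-c') (d-d') (p-p') (q-q')"
  by (simp add: vec6_eq)
lemma v6_smult[simp]: "k *s v6 a b c d p q = v6 (k*a) (k*b) (k*c) (k*d) (k*p) (k*q)"
  by (simp add: vec6_eq)
lemma v6_uminus[simp]: "- v6 a b c d p q = v6 (-a) (-b) (-c) (-d) (-p) (-q)"
  by (simp add: vec6_eq)

lemma lform_v6[simp]: "lform (v6 a b c d p q) (v6 a' b' c' d' p' q') =
   a*b' + b*a' + c*d' + d*c' - 6*p*p' - 2*q*q'"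
  by (simp add: lform_def)

lemma matvec_v6: "(M::'a::semiring_1^6^6) *v x = (\<chi> i. M$i$0*x$0 + M$i$1*x$1 + M$i$2*x$2 + M$i$3*x$3 + M$i$4*x$4 + M$i$5*x$5)"
  by (simp add: matrix_vector_mult_def sum6)

lemma lform_add1[simp]: "lform (x + y) z = lform x z + lform y z"
  and lform_add2[simp]: "lform z (x + y) = lform z x + lform z y"
  and lform_diff1[simp]: "lform (x - y) (z::'a::comm_ring_1^6) = lform x z - lform y z"
  and lform_diff2[simp]: "lform z (x - y) = lform z x - lform z y"
  and lform_smult1[simp]: "lform (c *s x) z = c * lform x z"
  and lform_smult2[simp]: "lform z (c *s x) = c * lform z x"
  and lform_neg1[simp]: "lform (- x) z = - lform x z"
  and lform_neg2[simp]: "lform z (- x) = - lform z x"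
  and lform_zero1[simp]: "lform 0 z = 0"
  and lform_zero2[simp]: "lform z 0 = 0"
  by (simp_all add: lform_def algebra_simps)

lemma lform_sym: "lform x y = lform y x"
  by (simp add: lform_def algebra_simps)

definition eich :: "'a::field_char_0^6 \<Rightarrow> 'a^6 \<Rightarrow> 'a^6 \<Rightarrow> 'a^6" where
  "eich e u x = x - lform x e *s u + lform x u *s e - (lform u u / 2 * lform x e) *s e"

definition reflG :: "'a::field_char_0^6 \<Rightarrow> 'a^6 \<Rightarrow> 'a^6" where
  "reflG w x = x - (2 * lform x w / lform w w) *s w"

lemma reflR_G: "reflR = reflG"
  by (simp add: fun_eq_iff reflR_def reflG_def)

lemma lin_eich: "Vector_Spaces.linear (*s) (*s) (eich e u)"
  by unfold_locales (simp_all add: eich_def vec_eq_iff algebra_simps add_divide_distrib)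

lemma lin_reflG: "Vector_Spaces.linear (*s) (*s) (reflG w)"
  by unfold_locales (simp_all add: reflG_def vec_eq_iff algebra_simps add_divide_distrib)




lemma eich_comp:
  fixes e a b :: "'a::field_char_0^6"
  assumes "lform e e = 0" "lform e a = 0" "lform e b = 0"
  shows "eich e a (eich e b x) = eich e (a + b) x"
proof -
  have s: "lform a e = 0" "lform b e = 0" "lform b a = lform a b" using assms lform_sym by metis+
  show ?thesis
    using assms s by (simp add: eich_def vec_eq_iff field_simps; (simp add: algebra_simps)?)
qed

lemma eich_zero: "eich e 0 x = x" by (simp add: eich_def)

lemma eich_iso:
  fixes e u :: "'a::field_char_0^6"
  assumes "lform e e = 0" "lform e u = 0"
  shows "lform (eich e u x) (eich e u y) = lform x y"
proof -
  have s: "lform u e = 0" using assms lform_sym by metis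
  have t: "lform y x = lform x y" "lform e x = lform x e" "lform e y = lform y e"
     "lform u x = lform x u" "lform u y = lform y u" using lform_sym by metis+
  show ?thesis
    using assms s t by (simp add: eich_def field_simps; (simp add: algebra_simps)?)
qed

lemma reflG_iso:
  fixes w :: "'a::field_char_0^6"
  assumes "lform w w \<noteq> 0"
  shows "lform (reflG w x) (reflG w y) = lform x y"
proof -
  have t: "lform w x = lform x w" "lform w y = lform y w" "lform y x = lform x y" using lform_sym by metis+
  show ?thesis
    using assms t by (simp add: reflG_def field_simps; (simp add: algebra_simps)?)
qed

lemma reflG_invol:
  fixes w :: "'a::field_char_0^6"
  assumes "lform w w \<noteq> 0"
  shows "reflG w (reflG w x) = x"
proof -
  have t: "lform w x = lform x w" using lform_sym by metis
  show ?thesis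
    using assms t by (simp add: reflG_def vec_eq_iff field_simps; (simp add: algebra_simps)?)
qed

lemma eich_refl:
  fixes e u :: "'a::field_char_0^6"
  assumes "lform e e = 0" "lform e u = 0" "lform u u \<noteq> 0"
  shows "eich e u x = reflG u (reflG (u + (- lform u u / 2) *s e) x)"
proof -
  have s: "lform u e = 0" using assms lform_sym by metis
  have t: "lform e x = lform x e" "lform u x = lform x u" using lform_sym by metis+
  show ?thesis
    using assms s t by (simp add: eich_def reflG_def vec_eq_iff field_simps; (simp add: algebra_simps)?)
qed




definition ofr :: "rat^6 \<Rightarrow> real^6" where "ofr x = (\<chi> i. of_rat (x$i))"

lemma ofr_nth[simp]: "ofr x $ i = of_rat (x$i)" by (simp add: ofr_def)

lemma ofr_lform[simp]: "of_rat (lform x y) = lform (ofr x) (ofr y)"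
  by (simp add: lform_def of_rat_add of_rat_mult of_rat_diff)

lemma ofr_eich: "ofr (eich e u x) = eich (ofr e) (ofr u) (ofr x)"
  by (simp add: vec_eq_iff eich_def of_rat_add of_rat_mult of_rat_diff of_rat_divide)

lemma ofr_reflG: "ofr (reflG w x) = reflG (ofr w) (ofr x)"
  by (simp add: vec_eq_iff reflG_def of_rat_add of_rat_mult of_rat_diff of_rat_divide)

lemma ofr_axis[simp]: "ofr (axis j 1) = axis j 1"
  by (simp add: vec_eq_iff axis_def)

lemma ofr_add[simp]: "ofr (x + y) = ofr x + ofr y" and ofr_uminus[simp]: "ofr (- x) = - ofr x"
  by (simp_all add: vec_eq_iff of_rat_add of_rat_minus)

lemma realify_matrix:
  assumes "Vector_Spaces.linear (*s) (*s) fR" "\<And>j. fR (axis j 1) = ofr (f (axis j 1))"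
  shows "realify (matrix f) = matrix fR"
  using assms by (simp add: realify_def matrix_def vec_eq_iff)

lemma realify_mult: "realify (A ** B) = realify A ** realify B"
  by (simp add: realify_def matrix_matrix_mult_def vec_eq_iff of_rat_sum of_rat_mult)

lemma realify_one: "realify (mat 1) = mat 1"
  by (simp add: realify_def mat_def vec_eq_iff)

lemma latL_iff: "x \<in> latL \<longleftrightarrow> x$0 \<in> \<int> \<and> x$1 \<in> \<int> \<and> x$2 \<in> \<int> \<and> x$3 \<in> \<int> \<and> x$4 \<in> \<int> \<and> x$5 \<in> \<int>"
  by (simp add: latL_def all6)

lemma latL_add: "x \<in> latL \<Longrightarrow> y \<in> latL \<Longrightarrow> x + y \<in> latL"
  and latL_diff: "x \<in> latL \<Longrightarrow> y \<in> latL \<Longrightarrow> x - y \<in> latL"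
  and latL_neg: "x \<in> latL \<Longrightarrow> - x \<in> latL"
  and latL_smult: "c \<in> \<int> \<Longrightarrow> x \<in> latL \<Longrightarrow> c *s x \<in> latL"
  by (auto simp: latL_def)

lemma latL_zero: "0 \<in> latL" by (simp add: latL_def)

lemma latL_axis: "axis j 1 \<in> latL" by (simp add: latL_def axis_def)

lemma lform_Ints: "x \<in> latL \<Longrightarrow> y \<in> latL \<Longrightarrow> lform x y \<in> \<int>"
  by (simp add: latL_iff lform_def)

lemma lform_half_Ints: "x \<in> latL \<Longrightarrow> lform x x / 2 \<in> \<int>"
proof -
  assume "x \<in> latL"
  then have "x$0*x$1 + x$2*x$3 - 3*x$4*x$4 - x$5*x$5 \<in> \<int>" by (simp add: latL_iff)
  moreover have "lform x x / 2 = x$0*x$1 + x$2*x$3 - 3*x$4*x$4 - x$5*x$5"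
    by (simp add: lform_def field_simps)
  ultimately show ?thesis by (simp only:)
qed

lemma latL_dual: "x \<in> latL \<Longrightarrow> x \<in> dualL"
  by (simp add: dualL_def lform_Ints)

lemma int_mat_matrix: "(\<And>j. f (axis j 1) \<in> latL) \<Longrightarrow> int_mat (matrix f)"
  by (simp add: int_mat_def matrix_def latL_def)

lemma int_mat_latL: "int_mat M \<Longrightarrow> x \<in> latL \<Longrightarrow> M *v x \<in> latL"
  by (simp add: int_mat_def latL_def matrix_vector_mult_def Ints_sum Ints_mult)

definition FR :: "(real^6) list \<Rightarrow> real^6 \<Rightarrow> real^6" where
  "FR ws = foldr (\<lambda>w f. reflR w \<circ> f) ws id"

lemma foldr_comp: "foldr (\<lambda>w f. reflR w \<circ> f) ws h = FR ws \<circ> h"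
  by (induct ws arbitrary: h) (auto simp: FR_def comp_assoc)

lemma FR_Cons: "FR (w # ws) = reflR w \<circ> FR ws" by (simp add: FR_def)

lemma FR_append: "FR (ws @ vs) = FR ws \<circ> FR vs"
  by (induct ws) (auto simp: FR_Cons comp_assoc, simp add: FR_def)

lemma FR_rev: "\<forall>w\<in>set ws. lform w w \<noteq> 0 \<Longrightarrow> FR (rev ws) \<circ> FR ws = id"
proof (induct ws)
  case Nil then show ?case by (simp add: FR_def)
next
  case (Cons w ws)
  have "FR (rev (w # ws)) \<circ> FR (w # ws) = FR (rev ws) \<circ> (reflR w \<circ> reflR w) \<circ> FR ws"
    by (simp add: FR_append FR_Cons comp_assoc) (simp add: FR_def)
  also have "reflR w \<circ> reflR w = id" using Cons.prems
    by (simp add: fun_eq_iff reflR_G reflG_invol)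
  finally show ?case using Cons by simp
qed

lemma spinor_one_iff: "spinor_one R \<longleftrightarrow> (\<exists>ws. (\<forall>w\<in>set ws. lform w w \<noteq> 0)
      \<and> (\<lambda>x. R *v x) = FR ws \<and> (\<Prod>w\<leftarrow>ws. - lform w w / 2) > 0)"
  by (simp add: spinor_one_def FR_def)

lemma spinor_one_id: "spinor_one (mat 1)"
  unfolding spinor_one_iff by (rule exI[of _ "[]"]) (simp add: FR_def fun_eq_iff)

lemma spinor_one_mult: "spinor_one A \<Longrightarrow> spinor_one B \<Longrightarrow> spinor_one (A ** B)"
  unfolding spinor_one_iff
proof (elim exE conjE)
  fix ws vs assume a: "\<forall>w\<in>set ws. lform w w \<noteq> 0" "(*v) A = FR ws" "0 < (\<Prod>w\<leftarrow>ws. - lform w w / 2)"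
    and b: "\<forall>w\<in>set vs. lform w w \<noteq> 0" "(*v) B = FR vs" "0 < (\<Prod>w\<leftarrow>vs. - lform w w / 2)"
  show "\<exists>ws. (\<forall>w\<in>set ws. lform w w \<noteq> 0) \<and> (*v) (A ** B) = FR ws \<and> 0 < (\<Prod>w\<leftarrow>ws. - lform w w / 2)"
    apply (rule exI[of _ "ws @ vs"])
    using a b by (auto simp: FR_append fun_eq_iff matrix_vector_mul_assoc[symmetric] dest: fun_cong)
qed

lemma spinor_one_inv:
  assumes "spinor_one A" "A ** B = mat 1" "B ** A = mat 1"
  shows "spinor_one B"
  using assms(1) unfolding spinor_one_iff
proof (elim exE conjE)
  fix ws assume a: "\<forall>w\<in>set ws. lform w w \<noteq> 0" "(*v) A = FR ws" "0 < (\<Prod>w\<leftarrow>ws. - lform w w / 2)"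
  have "(*v) B = FR (rev ws) \<circ> (FR ws \<circ> (*v) B)" using FR_rev[OF a(1)] by (simp add: comp_assoc[symmetric])
  also have "FR ws \<circ> (*v) B = id" using assms(2) a(2)
    by (simp add: fun_eq_iff matrix_vector_mul_assoc) (metis matrix_vector_mul_assoc matrix_vector_mul_lid)
  finally have "(*v) B = FR (rev ws)" by simp
  moreover have "(\<Prod>w\<leftarrow>rev ws. - lform w w / 2) = (\<Prod>w\<leftarrow>ws. - lform w w / 2)"
    by (induct ws) (simp_all add: mult.commute)
  ultimately show "\<exists>ws. (\<forall>w\<in>set ws. lform w w \<noteq> 0) \<and> (*v) B = FR ws \<and> 0 < (\<Prod>w\<leftarrow>ws. - lform w w / 2)"
    using a by (intro exI[of _ "rev ws"]) auto
qed




lemma int_mat_mult: "int_mat A \<Longrightarrow> int_mat B \<Longrightarrow> int_mat (A ** B)"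
  by (simp add: int_mat_def matrix_matrix_mult_def Ints_sum Ints_mult)

lemma int_mat_one: "int_mat (mat 1)"
  by (simp add: int_mat_def mat_def)

lemma OL_mult: assumes "A \<in> OL" "B \<in> OL" shows "A ** B \<in> OL"
proof -
  obtain NA where a: "int_mat A" "int_mat NA" "A ** NA = mat 1" "NA ** A = mat 1" "\<forall>x y. lform (A *v x) (A *v y) = lform x y"
    using assms(1) by (auto simp: OL_def)
  obtain NB where b: "int_mat B" "int_mat NB" "B ** NB = mat 1" "NB ** B = mat 1" "\<forall>x y. lform (B *v x) (B *v y) = lform x y"
    using assms(2) by (auto simp: OL_def)
  have "(A ** B) ** (NB ** NA) = mat 1"
    by (metis a(3) b(3) matrix_mul_assoc matrix_mul_rid)
  moreover have "(NB ** NA) ** (A ** B) = mat 1"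
    by (metis a(4) b(4) matrix_mul_assoc matrix_mul_rid)
  ultimately show ?thesis using a b
    by (auto simp: OL_def int_mat_mult matrix_vector_mul_assoc[symmetric] intro!: exI[of _ "NB ** NA"])
qed

lemma OL_inv: assumes "A \<in> OL" obtains B where "B \<in> OL" "A ** B = mat 1" "B ** A = mat 1"
proof -
  obtain NA where a: "int_mat A" "int_mat NA" "A ** NA = mat 1" "NA ** A = mat 1" "\<forall>x y. lform (A *v x) (A *v y) = lform x y"
    using assms(1) by (auto simp: OL_def)
  have "lform (NA *v x) (NA *v y) = lform x y" for x y
    using a(5)[rule_format, of "NA *v x" "NA *v y"] a(3) by (simp add: matrix_vector_mul_assoc)
  then have "NA \<in> OL" using a by (auto simp: OL_def)
  then show ?thesis using that a by blast
qed

lemma OL_one: "mat 1 \<in> OL"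
  by (auto simp: OL_def int_mat_one intro!: exI[of _ "mat 1"])

lemma OL_int: "A \<in> OL \<Longrightarrow> x \<in> latL \<Longrightarrow> A *v x \<in> latL"
  by (auto simp: OL_def int_mat_latL)

lemma OL_iso: "A \<in> OL \<Longrightarrow> lform (A *v x) (A *v y) = lform x y"
  by (auto simp: OL_def)

lemma OL_dual: assumes "A \<in> OL" "x \<in> dualL" shows "A *v x \<in> dualL"
proof -
  obtain B where b: "B \<in> OL" "A ** B = mat 1" "B ** A = mat 1" using OL_inv assms(1) by blast
  have "lform (A *v x) y \<in> \<int>" if "y \<in> latL" for y
  proof -
    have "lform (A *v x) y = lform (A *v x) (A *v (B *v y))"
      by (simp add: matrix_vector_mul_assoc b(2))
    also have "\<dots> = lform x (B *v y)" using OL_iso[OF assms(1)] by simp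
    finally show ?thesis using assms(2) OL_int[OF b(1) that] by (simp add: dualL_def)
  qed
  then show ?thesis by (simp add: dualL_def)
qed

lemma OtL_mult: assumes "A \<in> OtL" "B \<in> OtL" shows "A ** B \<in> OtL"
proof -
  have "(A ** B) *v x - x \<in> latL" if "x \<in> dualL" for x
  proof -
    have e: "(A ** B) *v x - x = (A *v (B *v x) - B *v x) + (B *v x - x)"
      by (simp add: matrix_vector_mul_assoc)
    have "B *v x \<in> dualL" using OL_dual assms(2) that by (auto simp: OtL_def)
    then have h1: "A *v (B *v x) - B *v x \<in> latL" using assms(1) by (auto simp: OtL_def)
    have h2: "B *v x - x \<in> latL" using assms(2) that by (auto simp: OtL_def)
    show ?thesis unfolding e using h1 h2 by (rule latL_add)
  qed
  then show ?thesis using assms OL_mult by (auto simp: OtL_def)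
qed

lemma OtL_inv: assumes "A \<in> OtL" "B \<in> OL" "A ** B = mat 1" "B ** A = mat 1" shows "B \<in> OtL"
proof -
  have "B *v x - x \<in> latL" if "x \<in> dualL" for x
  proof -
    have e: "B *v x - x = - (A *v (B *v x) - B *v x)"
      by (simp add: matrix_vector_mul_assoc assms(3))
    have "B *v x \<in> dualL" using OL_dual assms(2) that by auto
    then have h1: "A *v (B *v x) - B *v x \<in> latL" using assms(1) by (auto simp: OtL_def)
    show ?thesis unfolding e using h1 by (rule latL_neg)
  qed
  then show ?thesis using assms by (auto simp: OtL_def)
qed

lemma OtL_one: "mat 1 \<in> OtL" by (simp add: OtL_def OL_one latL_zero)

definition grp :: "(rat^6^6) set \<Rightarrow> bool" where
  "grp G \<longleftrightarrow> mat 1 \<in> G \<and> (\<forall>A\<in>G. \<forall>B\<in>G. A ** B \<in> G) \<and>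
     (\<forall>A\<in>G. \<exists>B\<in>G. A ** B = mat 1 \<and> B ** A = mat 1) \<and> G \<subseteq> OL"

lemma grp_OtplusL: "grp OtplusL"
proof -
  have "\<exists>B\<in>OtplusL. A ** B = mat 1 \<and> B ** A = mat 1" if "A \<in> OtplusL" for A
  proof -
    have "A \<in> OL" using that by (auto simp: OtplusL_def OtL_def)
    then obtain B where b: "B \<in> OL" "A ** B = mat 1" "B ** A = mat 1" using OL_inv by blast
    have "spinor_one (realify B)"
      using spinor_one_inv[of "realify A" "realify B"] that b by (simp add: OtplusL_def realify_mult[symmetric] realify_one)
    then show ?thesis using b that OtL_inv by (auto simp: OtplusL_def)
  qed
  moreover have "A ** B \<in> OtplusL" if "A \<in> OtplusL" "B \<in> OtplusL" for A B
    using that OtL_mult spinor_one_mult by (auto simp: OtplusL_def realify_mult)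
  moreover have "mat 1 \<in> OtplusL" using OtL_one spinor_one_id by (simp add: OtplusL_def realify_one)
  ultimately show ?thesis
    by (auto simp: grp_def OtplusL_def OtL_def)
qed

lemma grp_OplusL: "grp OplusL"
proof -
  have "\<exists>B\<in>OplusL. A ** B = mat 1 \<and> B ** A = mat 1" if "A \<in> OplusL" for A
  proof -
    have "A \<in> OL" using that by (auto simp: OplusL_def)
    then obtain B where b: "B \<in> OL" "A ** B = mat 1" "B ** A = mat 1" using OL_inv by blast
    have "spinor_one (realify B)"
      using spinor_one_inv[of "realify A" "realify B"] that b by (simp add: OplusL_def realify_mult[symmetric] realify_one)
    then show ?thesis using b that by (auto simp: OplusL_def)
  qed
  then show ?thesis
    by (auto simp: grp_def OplusL_def OL_one spinor_one_id realify_one OL_mult realify_mult spinor_one_mult)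
qed

lemma Ot_sub_O: "OtplusL \<subseteq> OplusL"
  by (auto simp: OtplusL_def OplusL_def OtL_def)

lemma gen_in:
  fixes f g :: "rat^6 \<Rightarrow> rat^6" and fR :: "real^6 \<Rightarrow> real^6"
  assumes lf: "Vector_Spaces.linear (*s) (*s) f" and lg: "Vector_Spaces.linear (*s) (*s) g"
    and fg: "\<And>x. f (g x) = x" and gf: "\<And>x. g (f x) = x"
    and fl: "\<And>j. f (axis j 1) \<in> latL" and gl: "\<And>j. g (axis j 1) \<in> latL"
    and iso: "\<And>x y. lform (f x) (f y) = lform x y"
    and du: "\<And>x. x \<in> dualL \<Longrightarrow> f x - x \<in> latL"
    and lR: "Vector_Spaces.linear (*s) (*s) fR" and fRa: "\<And>j. fR (axis j 1) = ofr (f (axis j 1))"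
    and sp: "spinor_one (matrix fR)"
  shows "matrix f \<in> OtplusL"
proof -
  have mf: "matrix f *v x = f x" for x using matrix_works[OF lf] .
  have mg: "matrix g *v x = g x" for x using matrix_works[OF lg] .
  have "matrix f ** matrix g = mat 1" by (simp add: matrix_eq matrix_vector_mul_assoc[symmetric] mf mg fg)
  moreover have "matrix g ** matrix f = mat 1" by (simp add: matrix_eq matrix_vector_mul_assoc[symmetric] mf mg gf)
  ultimately have "matrix f \<in> OL"
    using int_mat_matrix[of f, OF fl] int_mat_matrix[of g, OF gl] iso
    by (auto simp: OL_def mf intro!: exI[of _ "matrix g"])
  then show ?thesis using du sp realify_matrix[OF lR fRa]
    by (auto simp: OtplusL_def OtL_def mf)
qed

lemma lform_shift: "lform e e = 0 \<Longrightarrow> lform a e = 0 \<Longrightarrow> lform (a + t *s e) (a + t *s e) = lform a a"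
  by (simp add: lform_sym[of e a])

lemma eich_in:
  fixes e u z :: "rat^6"
  assumes el: "e \<in> latL" and ul: "u \<in> latL" and ee: "lform e e = 0" and eu: "lform e u = 0"
    and ez: "lform e z = 0" and zz: "lform z z \<noteq> 0" and uz: "lform (u + z) (u + z) \<noteq> 0"
  shows "matrix (eich e u) \<in> OtplusL"
proof (rule gen_in[where g = "eich e (- u)" and fR = "eich (ofr e) (ofr u)"])
  show "Vector_Spaces.linear (*s) (*s) (eich e u)" "Vector_Spaces.linear (*s) (*s) (eich e (- u))"
    "Vector_Spaces.linear (*s) (*s) (eich (ofr e) (ofr u))" by (rule lin_eich)+
  have eu': "lform e (- u) = 0" using eu by simp
  show "eich e u (eich e (- u) x) = x" for x by (simp add: eich_comp[OF ee eu eu'] eich_zero)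
  show "eich e (- u) (eich e u x) = x" for x by (simp add: eich_comp[OF ee eu' eu] eich_zero)
  have inl: "eich e v x \<in> latL" if "v \<in> latL" "x \<in> latL" for v x
    unfolding eich_def using that el
    by (intro latL_diff latL_add latL_smult lform_Ints Ints_mult lform_half_Ints) auto
  show "eich e u (axis j 1) \<in> latL" "eich e (- u) (axis j 1) \<in> latL" for j
    using inl ul latL_neg latL_axis by auto
  show "lform (eich e u x) (eich e u y) = lform x y" for x y by (rule eich_iso[OF ee eu])
  show "eich e u x - x \<in> latL" if "x \<in> dualL" for x
  proof -
    have "eich e u x - x = lform x u *s e - lform x e *s u - (lform u u / 2 * lform x e) *s e"
      by (simp add: eich_def algebra_simps)
    moreover have "lform x u \<in> \<int>" "lform x e \<in> \<int>" using that ul el by (auto simp: dualL_def)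
    moreover have "lform u u / 2 * lform x e \<in> \<int>"
      using lform_half_Ints[OF ul] \<open>lform x e \<in> \<int>\<close> by (rule Ints_mult)
    ultimately show ?thesis using el ul
      by (metis latL_diff latL_smult)
  qed
  show "eich (ofr e) (ofr u) (axis j 1) = ofr (eich e u (axis j 1))" for j by (simp add: ofr_eich)
  define E U Z where "E = ofr e" "U = ofr u" "Z = ofr z"
  have EE: "lform E E = 0" and EU: "lform E U = 0" and EZ: "lform E Z = 0"
     and ZZ: "lform Z Z \<noteq> 0" and UZ: "lform (U + Z) (U + Z) \<noteq> 0"
    using ee eu ez zz uz unfolding E_U_Z_def by (metis ofr_lform of_rat_eq_0_iff ofr_add)+
  have EU': "lform E (U + Z) = 0" and EZ': "lform E (- Z) = 0" using EU EZ by simp_all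
  have UE: "lform (U + Z) E = 0" "lform (- Z) E = 0" using EU' EZ' lform_sym by metis+
  have ZZ': "lform (- Z) (- Z) \<noteq> 0" using ZZ by simp
  define t1 t2 where "t1 = - lform (U + Z) (U + Z) / 2" "t2 = - lform (- Z) (- Z) / 2"
  define ws where "ws = [U + Z, U + Z + t1 *s E, - Z, - Z + t2 *s E]"
  have n: "lform (U + Z + t1 *s E) (U + Z + t1 *s E) = lform (U + Z) (U + Z)"
    "lform (- Z + t2 *s E) (- Z + t2 *s E) = lform (- Z) (- Z)"
    using lform_shift[OF EE UE(1)] lform_shift[OF EE UE(2)] by auto
  have "eich E U x = eich E (U + Z) (eich E (- Z) x)" for x
    using eich_comp[OF EE EU' EZ'] by simp
  also have "\<dots>x = FR ws x" for x
    unfolding ws_def FR_def t1_t2_def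
    using eich_refl[OF EE EU' UZ] eich_refl[OF EE EZ' ZZ'] by (simp add: reflR_G)
  finally have c: "eich E U x = FR ws x" for x .
  have "(*v) (matrix (eich E U)) = FR ws"
    unfolding fun_eq_iff using c matrix_works[OF lin_eich, of E U] by simp
  moreover have "\<forall>w\<in>set ws. lform w w \<noteq> 0"
    unfolding ws_def list.set ball_simps n using UZ ZZ' by blast
  moreover have "(\<Prod>w\<leftarrow>ws. - lform w w / 2) > 0"
  proof -
    define a b where "a = - lform (U + Z) (U + Z) / 2" "b = - lform (- Z) (- Z) / 2"
    have "(\<Prod>w\<leftarrow>ws. - lform w w / 2) = a * (a * (b * (b * 1)))"
      unfolding ws_def a_b_def by (simp only: list.map prod_list.Cons prod_list.Nil n)
    also have "\<dots> = (a * b)^2" by (simp add: power2_eq_square algebra_simps)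
    finally show ?thesis using UZ ZZ' by (simp add: a_b_def)
  qed
  ultimately show "spinor_one (matrix (eich (ofr e) (ofr u)))"
    unfolding spinor_one_iff E_U_Z_def by blast
qed

lemma refl_in:
  fixes w :: "rat^6"
  assumes wl: "w \<in> latL" and ww: "lform w w = -2"
  shows "matrix (reflG w) \<in> OtplusL"
proof (rule gen_in[where g = "reflG w" and fR = "reflG (ofr w)"])
  show "Vector_Spaces.linear (*s) (*s) (reflG w)" "Vector_Spaces.linear (*s) (*s) (reflG w)"
    "Vector_Spaces.linear (*s) (*s) (reflG (ofr w))" by (rule lin_reflG)+
  show "reflG w (reflG w x) = x" for x by (rule reflG_invol) (simp add: ww)
  show "reflG w (reflG w x) = x" for x by (rule reflG_invol) (simp add: ww)
  have r: "reflG w x = x + lform x w *s w" for x by (simp add: reflG_def ww)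
  show "reflG w (axis j 1) \<in> latL" "reflG w (axis j 1) \<in> latL" for j
    unfolding r using wl latL_axis by (auto intro!: latL_add latL_smult lform_Ints)
  show "lform (reflG w x) (reflG w y) = lform x y" for x y by (rule reflG_iso) (simp add: ww)
  show "reflG w x - x \<in> latL" if "x \<in> dualL" for x
    unfolding r using that wl by (auto simp: dualL_def intro!: latL_smult)
  show "reflG (ofr w) (axis j 1) = ofr (reflG w (axis j 1))" for j by (simp add: ofr_reflG)
  have WW: "lform (ofr w) (ofr w) = -2"
  proof -
    have "lform (ofr w) (ofr w) = of_rat (lform w w)" by simp
    then show ?thesis using ww by simp
  qed
  show "spinor_one (matrix (reflG (ofr w)))"
    unfolding spinor_one_iff
    by (rule exI[of _ "[ofr w]"]) (simp add: WW matrix_works[OF lin_reflG] FR_def reflR_G fun_eq_iff)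
qed




definition iv :: "int \<Rightarrow> int \<Rightarrow> int \<Rightarrow> int \<Rightarrow> int \<Rightarrow> int \<Rightarrow> rat^6" where
  "iv a b c d p q = v6 (of_int a) (of_int b) (of_int c) (of_int d) (of_int p) (of_int q)"

abbreviation "e0 \<equiv> v6 (1::rat) 0 0 0 0 0"

definition reach :: "rat^6 \<Rightarrow> rat^6 \<Rightarrow> bool" where
  "reach v w \<longleftrightarrow> (\<exists>M\<in>OtplusL. M *v v = w)"

definition reach0 :: "rat^6 \<Rightarrow> rat^6 \<Rightarrow> bool" where
  "reach0 v w \<longleftrightarrow> (\<exists>M\<in>OtplusL. M *v v = w \<and> M *v e0 = e0)"

lemma OtplusL_one: "mat 1 \<in> OtplusL" using grp_OtplusL by (simp add: grp_def)
lemma OtplusL_mult: "A \<in> OtplusL \<Longrightarrow> B \<in> OtplusL \<Longrightarrow> A ** B \<in> OtplusL"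
  using grp_OtplusL by (simp add: grp_def)

lemma reach_refl: "reach v v" unfolding reach_def using OtplusL_one by force
lemma reach0_refl: "reach0 v v" unfolding reach0_def using OtplusL_one by force
lemma reach_trans: "reach u v \<Longrightarrow> reach v w \<Longrightarrow> reach u w"
  unfolding reach_def by (metis OtplusL_mult matrix_vector_mul_assoc)
lemma reach0_trans: "reach0 u v \<Longrightarrow> reach0 v w \<Longrightarrow> reach0 u w"
  unfolding reach0_def by (metis OtplusL_mult matrix_vector_mul_assoc)
lemma reach0_reach: "reach0 u v \<Longrightarrow> reach u v"
  unfolding reach0_def reach_def by blast

lemma v6_latL: "a \<in> \<int> \<Longrightarrow> b \<in> \<int> \<Longrightarrow> c \<in> \<int> \<Longrightarrow> d \<in> \<int> \<Longrightarrow> p \<in> \<int> \<Longrightarrow> q \<in> \<int> \<Longrightarrow> v6 a b c d p q \<in> latL"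
  by (simp add: latL_iff)

lemma eich_move:
  fixes e u z :: "rat^6"
  assumes "e \<in> latL" "u \<in> latL" "lform e e = 0" "lform e u = 0"
    "lform e z = 0" "lform z z \<noteq> 0" "lform (u + z) (u + z) \<noteq> 0"
  shows "reach v (eich e u v)"
  unfolding reach_def using eich_in[OF assms] matrix_works[OF lin_eich] by blast

lemma eich_move0:
  fixes e u z :: "rat^6"
  assumes "e \<in> latL" "u \<in> latL" "lform e e = 0" "lform e u = 0"
    "lform e z = 0" "lform z z \<noteq> 0" "lform (u + z) (u + z) \<noteq> 0" "eich e u e0 = e0"
  shows "reach0 v (eich e u v)"
  unfolding reach0_def using eich_in[OF assms(1-7)] matrix_works[OF lin_eich] assms(8) by metis

lemma R1: "reach (iv a b c d p q) (iv (a + k*d) b (c - k*b) d p q)"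
proof -
  have "reach (iv a b c d p q) (eich (v6 1 0 0 0 0 0) (v6 0 0 (of_int k) 0 0 0) (iv a b c d p q))"
    by (rule eich_move[where z = "v6 0 0 0 0 0 1"]) (simp_all add: v6_latL)
  then show ?thesis by (simp add: eich_def iv_def algebra_simps)
qed

lemma R2: "reach (iv a b c d p q) (iv (a + k*c) b c (d - k*b) p q)"
proof -
  have "reach (iv a b c d p q) (eich (v6 1 0 0 0 0 0) (v6 0 0 0 (of_int k) 0 0) (iv a b c d p q))"
    by (rule eich_move[where z = "v6 0 0 0 0 0 1"]) (simp_all add: v6_latL)
  then show ?thesis by (simp add: eich_def iv_def algebra_simps)
qed

lemma R3: "reach (iv a b c d p q) (iv a (b + k*d) (c - k*a) d p q)"
proof -
  have "reach (iv a b c d p q) (eich (v6 0 1 0 0 0 0) (v6 0 0 (of_int k) 0 0 0) (iv a b c d p q))"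
    by (rule eich_move[where z = "v6 0 0 0 0 0 1"]) (simp_all add: v6_latL)
  then show ?thesis by (simp add: eich_def iv_def algebra_simps)
qed

lemma R4: "reach (iv a b c d p q) (iv a (b + k*c) c (d - k*a) p q)"
proof -
  have "reach (iv a b c d p q) (eich (v6 0 1 0 0 0 0) (v6 0 0 0 (of_int k) 0 0) (iv a b c d p q))"
    by (rule eich_move[where z = "v6 0 0 0 0 0 1"]) (simp_all add: v6_latL)
  then show ?thesis by (simp add: eich_def iv_def algebra_simps)
qed

lemma K1: "reach0 (iv a b c d p q) (iv a b (c - 6*k*p + 3*k^2*d) d (p - k*d) q)"
proof -
  have "reach0 (iv a b c d p q) (eich (v6 0 0 1 0 0 0) (v6 0 0 0 0 (of_int k) 0) (iv a b c d p q))"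
  proof (rule eich_move0[where z = "v6 0 0 0 0 0 1"])
    have "6 * (of_int k * of_int k) + (2::rat) > 0" by (simp add: add_nonneg_pos)
    then show "lform (v6 0 0 0 0 (of_int k) 0 + v6 0 0 0 0 0 1 :: rat^6) (v6 0 0 0 0 (of_int k) 0 + v6 0 0 0 0 0 1) \<noteq> 0"
      by (simp add: algebra_simps)
  qed (simp_all add: v6_latL eich_def)
  then show ?thesis by (simp add: eich_def iv_def algebra_simps power2_eq_square)
qed

lemma K2: "reach0 (iv a b c d p q) (iv a b (c - 2*k*q + k^2*d) d p (q - k*d))"
proof -
  have "reach0 (iv a b c d p q) (eich (v6 0 0 1 0 0 0) (v6 0 0 0 0 0 (of_int k)) (iv a b c d p q))"
  proof (rule eich_move0[where z = "v6 0 0 0 0 1 0"])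
    have "2 * (of_int k * of_int k) + (6::rat) > 0" by (simp add: add_nonneg_pos)
    then show "lform (v6 0 0 0 0 0 (of_int k) + v6 0 0 0 0 1 0 :: rat^6) (v6 0 0 0 0 0 (of_int k) + v6 0 0 0 0 1 0) \<noteq> 0"
      by (simp add: algebra_simps)
  qed (simp_all add: v6_latL eich_def)
  then show ?thesis by (simp add: eich_def iv_def algebra_simps power2_eq_square)
qed

lemma SK: "reach0 (iv a b c d p q) (iv a b d c p q)"
proof -
  have "matrix (reflG (v6 0 0 1 (-1) 0 0)) \<in> OtplusL"
    by (rule refl_in) (simp_all add: v6_latL)
  moreover have "reflG (v6 0 0 1 (-1) 0 0) (iv a b c d p q) = iv a b d c p q"
    by (simp add: reflG_def iv_def field_simps)
  moreover have "reflG (v6 0 0 1 (-1) 0 0) e0 = e0" by (simp add: reflG_def)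
  ultimately show ?thesis unfolding reach0_def by (metis matrix_works[OF lin_reflG])
qed




lemma reach_cong: "reach v w \<Longrightarrow> w = w' \<Longrightarrow> reach v w'" by simp
lemma reach0_cong: "reach0 v w \<Longrightarrow> w = w' \<Longrightarrow> reach0 v w'" by simp

lemma iv_eq: "a = a' \<Longrightarrow> b = b' \<Longrightarrow> c = c' \<Longrightarrow> d = d' \<Longrightarrow> p = p' \<Longrightarrow> q = q' \<Longrightarrow> iv a b c d p q = iv a' b' c' d' p' q'"
  by simp

lemma swapC: "reach (iv a b c d p q) (iv c d (-a) (-b) p q)"
proof -
  have 1: "reach (iv a b c d p q) (iv (a+c) b c (d-b) p q)" using R2[of a b c d p q 1] by simp
  have 2: "reach (iv (a+c) b c (d-b) p q) (iv (a+c) d (-a) (d-b) p q)"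
    using R3[of "a+c" b c "d-b" p q 1] by simp
  have 3: "reach (iv (a+c) d (-a) (d-b) p q) (iv c d (-a) (-b) p q)"
    using R2[of "a+c" d "-a" "d-b" p q 1] by simp
  show ?thesis using reach_trans[OF 1 reach_trans[OF 2 3]] .
qed

lemma swapR: "reach (iv a b c d p q) (iv (-d) (-c) b a p q)"
proof -
  have 1: "reach (iv a b c d p q) (iv (a-d) b (c+b) d p q)" using R1[of a b c d p q "-1"] by simp
  have 2: "reach (iv (a-d) b (c+b) d p q) (iv (a-d) (-c) (c+b) a p q)"
    using R4[of "a-d" b "c+b" d p q "-1"] by simp
  have 3: "reach (iv (a-d) (-c) (c+b) a p q) (iv (-d) (-c) b a p q)"
    using R1[of "a-d" "-c" "c+b" a p q "-1"] by simp
  show ?thesis using reach_trans[OF 1 reach_trans[OF 2 3]] .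
qed

lemma diag_nz: "a \<noteq> 0 \<Longrightarrow> \<exists>a' b'. reach (iv a b c d p q) (iv a' b' 0 0 p q)"
proof (induct "nat \<bar>a\<bar>" arbitrary: a b c d rule: less_induct)
  case less
  define k r where "k = c div a" "r = c mod a"
  have r: "c - k * a = r" unfolding k_r_def by (simp add: minus_div_mult_eq_mod)
  have rl: "\<bar>r\<bar> < \<bar>a\<bar>" unfolding k_r_def using less.prems by (simp add: abs_mod_less)
  have s1: "reach (iv a b c d p q) (iv a (b + k*d) r d p q)" using R3[of a b c d p q k] r by simp
  show ?case
  proof (cases "r = 0")
    case False
    have s2: "reach (iv a (b + k*d) r d p q) (iv r d (-a) (-(b+k*d)) p q)" by (rule swapC)
    have "nat \<bar>r\<bar> < nat \<bar>a\<bar>" using rl by simp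
    then obtain a' b' where "reach (iv r d (-a) (-(b+k*d)) p q) (iv a' b' 0 0 p q)"
      using less.hyps False by blast
    then show ?thesis using reach_trans[OF s1 reach_trans[OF s2]] by blast
  next
    case True
    define k' s where "k' = d div a" "s = d mod a"
    have s: "d - k' * a = s" unfolding k'_s_def by (simp add: minus_div_mult_eq_mod)
    have sl: "\<bar>s\<bar> < \<bar>a\<bar>" unfolding k'_s_def using less.prems by (simp add: abs_mod_less)
    have s2: "reach (iv a (b + k*d) r d p q) (iv a (b + k*d) 0 s p q)"
      using R4[of a "b + k*d" r d p q k'] s True by simp
    show ?thesis
    proof (cases "s = 0")
      case True
      then show ?thesis using reach_trans[OF s1 s2] by blast
    next
      case False
      have s3: "reach (iv a (b + k*d) 0 s p q) (iv (-s) 0 (b + k*d) a p q)"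
        using swapR[of a "b + k*d" 0 s p q] by simp
      have "nat \<bar>-s\<bar> < nat \<bar>a\<bar>" using sl by simp
      then obtain a' b' where "reach (iv (-s) 0 (b + k*d) a p q) (iv a' b' 0 0 p q)"
        using less.hyps False by (metis neg_equal_0_iff_equal)
      then show ?thesis using reach_trans[OF s1 reach_trans[OF s2 reach_trans[OF s3]]] by blast
    qed
  qed
qed

lemma diag: "\<exists>a' b'. reach (iv a b c d p q) (iv a' b' 0 0 p q)"
proof (cases "a = 0")
  case False then show ?thesis using diag_nz by blast
next
  case a: True
  show ?thesis
  proof (cases "c = 0")
    case False
    have "reach (iv a b c d p q) (iv c d (-a) (-b) p q)" by (rule swapC)
    then show ?thesis using diag_nz[OF False, of d "-a" "-b" p q] reach_trans by blast
  next
    case c: True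
    show ?thesis
    proof (cases "d = 0")
      case True then show ?thesis using a c reach_refl by blast
    next
      case False
      have "reach (iv a b c d p q) (iv (-d) (-c) b a p q)" by (rule swapR)
      moreover have "-d \<noteq> 0" using False by simp
      ultimately show ?thesis using diag_nz[of "-d" "-c" b a p q] reach_trans by blast
    qed
  qed
qed




lemma red: "(d::int) \<noteq> 0 \<Longrightarrow> \<exists>k. 2 * \<bar>p - k*d\<bar> \<le> \<bar>d\<bar>"
proof -
  assume d: "d \<noteq> 0"
  define r where "r = p mod d"
  have pr: "p - (p div d) * d = r" unfolding r_def by (simp add: minus_div_mult_eq_mod)
  have pr2: "p - (p div d + 1) * d = r - d" using pr by (simp add: algebra_simps)
  show ?thesis
  proof (cases "2 * \<bar>r\<bar> \<le> \<bar>d\<bar>")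
    case True then show ?thesis using pr by metis
  next
    case False
    have "0 < d \<Longrightarrow> 0 \<le> r \<and> r < d" unfolding r_def by simp
    moreover have "d < 0 \<Longrightarrow> d < r \<and> r \<le> 0" unfolding r_def by simp
    ultimately have "2 * \<bar>r - d\<bar> \<le> \<bar>d\<bar>" using False d by (smt (verit))
    then show ?thesis using pr2 by metis
  qed
qed

lemma sq_bound: "2 * \<bar>p\<bar> \<le> \<bar>(d::int)\<bar> \<Longrightarrow> 4 * p^2 \<le> d^2"
proof -
  assume "2 * \<bar>p\<bar> \<le> \<bar>d\<bar>"
  then have "\<bar>2 * p\<bar> \<le> \<bar>d\<bar>" by (simp add: abs_mult)
  then have "(2 * p)^2 \<le> d^2" by (simp only: abs_le_square_iff)
  then show ?thesis by (simp add: power_mult_distrib)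
qed

lemma sq_eq: "4 * p^2 = (d::int)^2 \<Longrightarrow> d = 2*p \<or> d = -2*p"
proof -
  assume "4 * p^2 = d^2"
  then have "(d - 2*p) * (d + 2*p) = 0" by (simp add: algebra_simps power2_eq_square)
  then show ?thesis by auto
qed

lemma kdesc: "c * d = 3 * p^2 + q^2 \<Longrightarrow>
   \<exists>g. reach0 (iv 0 0 c d p q) (iv 0 0 g 0 0 0) \<or> reach0 (iv 0 0 c d p q) (iv 0 0 (2*g) (2*g) g g)"
proof (induct "nat \<bar>d\<bar>" arbitrary: c d p q rule: less_induct)
  case less
  show ?case
  proof (cases "d = 0")
    case True
    then have "3 * p^2 + q^2 = 0" using less.prems by simp
    then have "p = 0" "q = 0" by (simp_all add: add_nonneg_eq_0_iff)
    then show ?thesis using True reach0_refl by blast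
  next
    case dnz: False
    obtain k1 where k1: "2 * \<bar>p - k1*d\<bar> \<le> \<bar>d\<bar>" using red[OF dnz] by blast
    obtain k2 where k2: "2 * \<bar>q - k2*d\<bar> \<le> \<bar>d\<bar>" using red[OF dnz] by blast
    define c1 p1 where "c1 = c - 6*k1*p + 3*k1^2*d" "p1 = p - k1*d"
    define c2 q2 where "c2 = c1 - 2*k2*q + k2^2*d" "q2 = q - k2*d"
    have s1: "reach0 (iv 0 0 c d p q) (iv 0 0 c1 d p1 q)" unfolding c1_p1_def by (rule K1)
    have s2: "reach0 (iv 0 0 c1 d p1 q) (iv 0 0 c2 d p1 q2)" unfolding c2_q2_def by (rule K2)
    have s12: "reach0 (iv 0 0 c d p q) (iv 0 0 c2 d p1 q2)" using reach0_trans[OF s1 s2] .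
    have iso: "c2 * d = 3 * p1^2 + q2^2"
      using less.prems unfolding c2_q2_def c1_p1_def by (simp add: algebra_simps power2_eq_square)
    have b1: "4 * p1^2 \<le> d^2" using sq_bound k1 c1_p1_def(2) by simp
    have b2: "4 * q2^2 \<le> d^2" using sq_bound k2 c2_q2_def(2) by simp
    show ?thesis
    proof (cases "\<bar>c2\<bar> < \<bar>d\<bar>")
      case True
      have s3: "reach0 (iv 0 0 c2 d p1 q2) (iv 0 0 d c2 p1 q2)" by (rule SK)
      have "nat \<bar>c2\<bar> < nat \<bar>d\<bar>" using True by simp
      moreover have "d * c2 = 3 * p1^2 + q2^2" using iso by (simp add: mult.commute)
      ultimately obtain g where "reach0 (iv 0 0 d c2 p1 q2) (iv 0 0 g 0 0 0) \<or> reach0 (iv 0 0 d c2 p1 q2) (iv 0 0 (2*g) (2*g) g g)"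
        using less.hyps by blast
      then show ?thesis using reach0_trans[OF s12 reach0_trans[OF s3]] by blast
    next
      case False
      have nn: "c2 * d \<ge> 0" using iso by simp
      have "\<bar>d\<bar> \<le> \<bar>c2\<bar>" using False by simp
      then have "\<bar>d\<bar> * \<bar>d\<bar> \<le> \<bar>c2\<bar> * \<bar>d\<bar>" by (rule mult_right_mono) simp
      then have "d^2 \<le> c2 * d" using nn by (simp add: power2_eq_square abs_mult[symmetric])
      then have e: "4 * p1^2 = d^2" "4 * q2^2 = d^2" "c2 * d = d * d" using iso b1 b2
        by (simp_all add: power2_eq_square)
      have c2d: "c2 = d" using e(3) dnz by simp
      obtain g where dg: "d = 2*g" and pg: "p1 = g \<or> p1 = -g"
        using sq_eq[OF e(1)] by (metis minus_minus mult_minus_left mult_minus_right)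
      have qg: "q2 = g \<or> q2 = -g" using sq_eq[OF e(2)] dg by auto
      have t1: "reach0 (iv 0 0 (2*g) (2*g) p1 q2) (iv 0 0 (2*g) (2*g) g q2)"
      proof (cases "p1 = g")
        case True then show ?thesis using reach0_refl by simp
      next
        case False
        then have "p1 = -g" using pg by simp
        then show ?thesis using K1[of 0 0 "2*g" "2*g" p1 q2 "-1"] by (simp add: algebra_simps)
      qed
      have t2: "reach0 (iv 0 0 (2*g) (2*g) g q2) (iv 0 0 (2*g) (2*g) g g)"
      proof (cases "q2 = g")
        case True then show ?thesis using reach0_refl by simp
      next
        case False
        then have "q2 = -g" using qg by simp
        then show ?thesis using K2[of 0 0 "2*g" "2*g" g q2 "-1"] by (simp add: algebra_simps)
      qed
      show ?thesis using reach0_trans[OF s12 reach0_trans[OF _ reach0_trans[OF t1 t2]]] c2d dg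
        reach0_refl by metis
    qed
  qed
qed

lemma reach_lform: "reach v w \<Longrightarrow> lform w w = lform v v"
  unfolding reach_def using grp_OtplusL OL_iso by (auto simp: grp_def)

lemma iv_lform: "lform (iv a b c d p q) (iv a b c d p q) = 2 * of_int (a*b + c*d - 3*p^2 - q^2)"
  by (simp add: iv_def algebra_simps power2_eq_square)

lemma line_int: "a*b + c*d = 3*p^2 + q^2 \<Longrightarrow>
   \<exists>g. reach (iv a b c d p q) (iv g 0 0 0 0 0) \<or> reach (iv a b c d p q) (iv 0 0 (2*g) (2*g) g g)"
proof -
  assume iso: "a*b + c*d = 3*p^2 + q^2"
  obtain a' b' where s1: "reach (iv a b c d p q) (iv a' b' 0 0 p q)" using diag by blast
  have h: "lform (iv a' b' 0 0 p q) (iv a' b' 0 0 p q) = lform (iv a b c d p q) (iv a b c d p q)"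
    by (rule reach_lform[OF s1])
  then have "(2::rat) * of_int (a'*b' + 0*0 - 3*p^2 - q^2) = 2 * of_int (a*b + c*d - 3*p^2 - q^2)"
    by (simp only: iv_lform)
  then have "a'*b' + 0*0 - 3*p^2 - q^2 = a*b + c*d - 3*p^2 - q^2" by (simp only: mult_cancel_left of_int_eq_iff) simp
  then have iso': "a' * b' = 3*p^2 + q^2" using iso by simp
  have s2: "reach (iv a' b' 0 0 p q) (iv 0 0 (-a') (-b') p q)" using swapC[of a' b' 0 0 p q] by simp
  have "(-a') * (-b') = 3*p^2 + q^2" using iso' by simp
  then obtain g where "reach0 (iv 0 0 (-a') (-b') p q) (iv 0 0 g 0 0 0) \<or> reach0 (iv 0 0 (-a') (-b') p q) (iv 0 0 (2*g) (2*g) g g)"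
    using kdesc by blast
  moreover have "reach (iv 0 0 g 0 0 0) (iv g 0 0 0 0 0)" using swapC[of 0 0 g 0 0 0] by simp
  ultimately show ?thesis using reach_trans[OF s1 reach_trans[OF s2]] reach0_reach reach_trans by blast
qed




lemma iso_span:
  assumes B: "\<forall>a\<in>B. \<forall>b\<in>B. lform a b = 0" and x: "x \<in> vec.span B" and y: "y \<in> vec.span B"
  shows "lform x y = 0"
proof -
  have s1: "vec.subspace {x. \<forall>b\<in>B. lform x b = 0}"
    by (auto simp: vec.subspace_def)
  have "vec.span B \<subseteq> {x. \<forall>b\<in>B. lform x b = 0}"
    by (rule vec.span_minimal[OF _ s1]) (use B in auto)
  then have h: "\<forall>x\<in>vec.span B. \<forall>b\<in>B. lform x b = 0" by auto
  have s2: "vec.subspace {y. \<forall>x\<in>vec.span B. lform x y = 0}"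
    by (auto simp: vec.subspace_def)
  have "vec.span B \<subseteq> {y. \<forall>x\<in>vec.span B. lform x y = 0}"
    by (rule vec.span_minimal[OF _ s2]) (use h in auto)
  then show ?thesis using x y by auto
qed

lemma span_scale1: "s \<noteq> 0 \<Longrightarrow> vec.span {s *s v} = vec.span {v}"
proof -
  assume s: "s \<noteq> 0"
  have "v = (1/s) *s (s *s v)" using s by (simp add: vector_smult_assoc)
  then have "v \<in> vec.span {s *s v}" by (metis vec.span_base vec.span_scale singletonI)
  moreover have "s *s v \<in> vec.span {v}" by (simp add: vec.span_base vec.span_scale)
  ultimately show ?thesis by (simp add: vec.span_eq)
qed

lemma span_scale2: "s \<noteq> 0 \<Longrightarrow> vec.span {a, s *s v} = vec.span {a, v}"
proof -
  assume s: "s \<noteq> 0"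
  have "v = (1/s) *s (s *s v)" using s by (simp add: vector_smult_assoc)
  then have "v \<in> vec.span {a, s *s v}" by (metis vec.span_base vec.span_scale insertI1 insertI2 insert_commute)
  moreover have "s *s v \<in> vec.span {a, v}" by (simp add: vec.span_base vec.span_scale)
  ultimately show ?thesis by (simp add: vec.span_eq vec.span_base)
qed

lemma span_shift2: "vec.span {a, v - k *s a} = vec.span {a, v}"
proof -
  have "v - k *s a \<in> vec.span {a, v}" by (simp add: vec.span_base vec.span_scale vec.span_diff)
  moreover have "v \<in> vec.span {a, v - k *s a}"
  proof -
    have "v = (v - k *s a) + k *s a" by simp
    also have "\<dots> \<in> vec.span {a, v - k *s a}" by (intro vec.span_add vec.span_scale vec.span_base) auto
    finally show ?thesis .
  qed
  ultimately show ?thesis by (simp add: vec.span_eq vec.span_base)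
qed

lemma tiso1_basis: assumes "tiso 1 l" shows "\<exists>v. v \<noteq> 0 \<and> l = vec.span {v}"
proof -
  have sub: "vec.subspace l" "vec.dim l = 1" using assms by (auto simp: tiso_def)
  obtain B where B: "B \<subseteq> l" "vec.independent B" "l \<subseteq> vec.span B" "card B = vec.dim l"
    using vec.basis_exists by blast
  then obtain v where "B = {v}" using sub card_1_singletonE by metis
  moreover have "v \<noteq> 0" using B(2) calculation vec.dependent_zero by blast
  ultimately show ?thesis using vec.span_subspace[OF B(1) B(3) sub(1)] by blast
qed

lemma tiso2_basis: assumes "tiso 2 P" shows "\<exists>x y. vec.independent {x, y} \<and> x \<noteq> y \<and> P = vec.span {x, y}"
proof -
  have sub: "vec.subspace P" "vec.dim P = 2" using assms by (auto simp: tiso_def)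
  obtain B where B: "B \<subseteq> P" "vec.independent B" "P \<subseteq> vec.span B" "card B = vec.dim P"
    using vec.basis_exists by blast
  then obtain x y where "B = {x, y}" "x \<noteq> y" using sub card_2_iff by metis
  then show ?thesis using vec.span_subspace[OF B(1) B(3) sub(1)] B by blast
qed

lemma scale_int: "\<exists>s::rat. s \<in> \<int> \<and> s \<noteq> 0 \<and> (\<forall>i\<in>I. s * v$i \<in> \<int>)" if "finite I"
  using that
proof (induct I)
  case empty then show ?case by (rule exI[of _ 1]) simp
next
  case (insert i I)
  then obtain s where s: "s \<in> \<int>" "s \<noteq> 0" "\<forall>j\<in>I. s * v$j \<in> \<int>" by blast
  obtain n d where q: "quotient_of (v$i) = (n, d)" by (cases "quotient_of (v$i)")
  have nd: "v$i = of_int n / of_int d" "d > 0"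
    using quotient_of_div[OF q] quotient_of_denom_pos[OF q] by auto
  have "(s * of_int d) * v$j \<in> \<int>" if "j \<in> I" for j
  proof -
    have "(s * of_int d) * v$j = (s * v$j) * of_int d" by simp
    then show ?thesis using s(3) that by (metis Ints_mult Ints_of_int)
  qed
  moreover have "s * of_int d * v$i = s * of_int n" using nd by simp
  moreover have "s * of_int d \<in> \<int>" using s(1) by simp
  ultimately show ?case using s nd
    by (intro exI[of _ "s * of_int d"]) auto
qed

lemma scale_latL: "\<exists>s::rat. s \<noteq> 0 \<and> s *s v \<in> latL"
proof -
  obtain s where "s \<in> \<int>" "s \<noteq> 0" "\<forall>i\<in>UNIV. s * v$i \<in> \<int>" using scale_int[of UNIV v] by auto
  then show ?thesis by (auto simp: latL_def)
qed

lemma latL_iv: "v \<in> latL \<Longrightarrow> \<exists>a b c d p q. v = iv a b c d p q"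
proof -
  assume "v \<in> latL"
  then obtain a b c d p q where "v$0 = of_int a" "v$1 = of_int b" "v$2 = of_int c" "v$3 = of_int d"
    "v$4 = of_int p" "v$5 = of_int q" by (auto simp: latL_iff elim!: Ints_cases)
  then show ?thesis by (auto simp: iv_def vec6_eq)
qed

lemma iv_iso: "lform (iv a b c d p q) (iv a b c d p q) = 0 \<Longrightarrow> a*b + c*d = 3*p^2 + q^2"
proof -
  assume "lform (iv a b c d p q) (iv a b c d p q) = 0"
  then have "(2::rat) * of_int (a*b + c*d - 3*p^2 - q^2) = 0" by (simp only: iv_lform)
  then have "a*b + c*d - 3*p^2 - q^2 = 0" by (simp only: mult_eq_0_iff of_int_eq_0_iff) simp
  then show ?thesis by simp
qed




abbreviation "w1 \<equiv> v6 (0::rat) 0 2 2 1 1"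
abbreviation "e2 \<equiv> v6 (0::rat) 0 1 0 0 0"

lemma iv_e0: "iv g 0 0 0 0 0 = of_int g *s e0" by (simp add: iv_def)
lemma iv_e2: "iv 0 0 g 0 0 0 = of_int g *s e2" by (simp add: iv_def)
lemma iv_w1: "iv 0 0 (2*g) (2*g) g g = of_int g *s w1" by (simp add: iv_def)

lemma mv_scale: "(M::'a::comm_ring_1^6^6) *v (c *s x) = c *s (M *v x)"
  by (simp add: vec_eq_iff matrix_vector_mult_def sum_distrib_left algebra_simps)

lemma image_inv: "N ** M = mat 1 \<Longrightarrow> (\<lambda>x. N *v x) ` ((\<lambda>x. M *v x) ` S) = S"
  by (simp add: image_image matrix_vector_mul_assoc)

lemma grp_inv: assumes "grp G" "M \<in> G" obtains N where "N \<in> G" "M ** N = mat 1" "N ** M = mat 1"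
  using assms by (auto simp: grp_def)

lemma orbit_img: assumes g: "grp G" and N: "N \<in> G" shows "orbit G ((\<lambda>x. N *v x) ` T) = orbit G T"
proof
  show "orbit G ((\<lambda>x. N *v x) ` T) \<subseteq> orbit G T"
  proof
    fix S assume "S \<in> orbit G ((\<lambda>x. N *v x) ` T)"
    then obtain M where M: "M \<in> G" "S = (\<lambda>x. M *v x) ` (\<lambda>x. N *v x) ` T" by (auto simp: orbit_def)
    then have "S = (\<lambda>x. (M ** N) *v x) ` T" by (simp add: image_image matrix_vector_mul_assoc)
    moreover have "M ** N \<in> G" using g M N by (simp add: grp_def)
    ultimately show "S \<in> orbit G T" by (auto simp: orbit_def)
  qed
next
  show "orbit G T \<subseteq> orbit G ((\<lambda>x. N *v x) ` T)"
  proof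
    fix S assume "S \<in> orbit G T"
    then obtain M where M: "M \<in> G" "S = (\<lambda>x. M *v x) ` T" by (auto simp: orbit_def)
    obtain N' where N': "N' \<in> G" "N ** N' = mat 1" "N' ** N = mat 1" using grp_inv[OF g N] by blast
    have "S = (\<lambda>x. (M ** N') *v x) ` (\<lambda>x. N *v x) ` T"
      using M(2) N'(3) by (simp add: image_image matrix_vector_mul_assoc matrix_mul_assoc[symmetric])
    moreover have "M ** N' \<in> G" using g M N' by (simp add: grp_def)
    ultimately show "S \<in> orbit G ((\<lambda>x. N *v x) ` T)" by (auto simp: orbit_def)
  qed
qed

lemma orbit_self: "grp G \<Longrightarrow> S \<in> orbit G S"
  by (auto simp: orbit_def grp_def intro!: exI[of _ "mat 1"])

lemma half_not_Int: "(1/2::rat) \<notin> \<int>"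
proof
  assume "(1/2::rat) \<in> \<int>"
  then obtain n where "(1/2::rat) = of_int n" by (auto elim: Ints_cases)
  then have "(of_int 1::rat) = of_int (2*n)" by (simp add: field_simps)
  then have "1 = 2*n" by (simp only: of_int_eq_iff)
  then show False by presburger
qed

lemma span_P0: "x \<in> vec.span {e0, e2} \<Longrightarrow> x$1 = 0 \<and> x$3 = 0 \<and> x$4 = 0 \<and> x$5 = 0"
proof -
  have "vec.subspace {x::rat^6. x$1 = 0 \<and> x$3 = 0 \<and> x$4 = 0 \<and> x$5 = 0}"
    by (auto simp: vec.subspace_def)
  then have "vec.span {e0, e2} \<subseteq> {x::rat^6. x$1 = 0 \<and> x$3 = 0 \<and> x$4 = 0 \<and> x$5 = 0}"
    by (rule vec.span_minimal[rotated]) auto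
  then show "x \<in> vec.span {e0, e2} \<Longrightarrow> ?thesis" by auto
qed

lemma key: assumes M: "M \<in> OL" shows "M *v w1 \<notin> vec.span {e0, e2}"
proof
  assume x: "M *v w1 \<in> vec.span {e0, e2}"
  define x where "x = M *v w1"
  obtain N where N: "N \<in> OL" "M ** N = mat 1" "N ** M = mat 1" using OL_inv[OF M] by blast
  have w1L: "w1 \<in> latL" by (simp add: v6_latL)
  have xl: "x \<in> latL" unfolding x_def using OL_int[OF M w1L] .
  have ev: "lform x y / 2 \<in> \<int>" if "y \<in> latL" for y
  proof -
    have "lform x y = lform (M *v w1) (M *v (N *v y))" by (simp add: x_def matrix_vector_mul_assoc N(2))
    also have "\<dots> = lform w1 (N *v y)" by (rule OL_iso[OF M])
    finally have e: "lform x y / 2 = (N *v y)$3 + (N *v y)$2 - 3 * (N *v y)$4 - (N *v y)$5"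
      by (simp add: lform_def)
    have "N *v y \<in> latL" using OL_int[OF N(1) that] .
    then have "(N *v y)$3 + (N *v y)$2 - 3 * (N *v y)$4 - (N *v y)$5 \<in> \<int>"
      by (intro Ints_diff Ints_add Ints_mult) (auto simp: latL_iff)
    then show ?thesis by (simp only: e)
  qed
  have z: "x$1 = 0" "x$3 = 0" "x$4 = 0" "x$5 = 0" using span_P0 x unfolding x_def by auto
  have "lform x (axis 1 1) = x$0" "lform x (axis 3 1) = x$2" by (simp_all add: lform_def axis_def)
  then have h: "x$0 / 2 \<in> \<int>" "x$2 / 2 \<in> \<int>" using ev latL_axis by metis+
  have "(1/2) *s x \<in> latL" using h z by (simp add: latL_iff)
  then have "N *v ((1/2) *s x) \<in> latL" using OL_int[OF N(1)] by blast
  moreover have "N *v ((1/2) *s x) = (1/2) *s w1"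
    by (simp add: mv_scale x_def matrix_vector_mul_assoc N(3))
  ultimately have "(1/2) *s w1 \<in> latL" by simp
  then show False using half_not_Int by (simp add: latL_iff)
qed

lemma v6_zero[simp]: "v6 a b c d p q = 0 \<longleftrightarrow> a = 0 \<and> b = 0 \<and> c = 0 \<and> d = 0 \<and> p = 0 \<and> q = 0"
  by (simp add: vec6_eq)

lemma indep1: "v \<noteq> 0 \<Longrightarrow> vec.independent {v}"
  by (simp add: vec.independent_insert)

lemma indep_e0: "\<forall>k. k *s v \<noteq> e0 \<Longrightarrow> v \<noteq> 0 \<Longrightarrow> vec.independent {e0, v}"
  by (auto simp: vec.independent_insert vec.span_singleton)

lemma tiso_span:
  assumes "vec.independent B" "card B = k" "\<forall>a\<in>B. \<forall>b\<in>B. lform a b = 0"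
  shows "tiso k (vec.span B)"
  using assms iso_span unfolding tiso_def by (auto simp: vec.dim_span_eq_card_independent vec.dim_eq_card_independent)

lemma tiso_l0: "tiso 1 (vec.span {e0})"
  by (rule tiso_span) (auto simp: indep1)
lemma tiso_l1: "tiso 1 (vec.span {w1})"
  by (rule tiso_span) (auto simp: indep1)
lemma ind_P0: "vec.independent {e0, e2}" by (rule indep_e0) auto
lemma ind_P1: "vec.independent {e0, w1}" by (rule indep_e0) auto
lemma tiso_P0: "tiso 2 (vec.span {e0, e2})"
  by (rule tiso_span[OF ind_P0]) auto
lemma tiso_P1: "tiso 2 (vec.span {e0, w1})"
  by (rule tiso_span[OF ind_P1]) auto

lemma inv_nz: assumes "M \<in> OL" "u \<noteq> 0" shows "M *v u \<noteq> 0"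
proof
  assume "M *v u = 0"
  obtain N where N: "N \<in> OL" "M ** N = mat 1" "N ** M = mat 1" using OL_inv[OF assms(1)] by blast
  have "u = N *v (M *v u)" by (simp add: matrix_vector_mul_assoc N(3))
  then show False using \<open>M *v u = 0\<close> assms(2) by simp
qed

lemma OtplusL_OL: "M \<in> OtplusL \<Longrightarrow> M \<in> OL" by (auto simp: OtplusL_def OtL_def)

lemma line_class: assumes "tiso 1 l"
  shows "\<exists>N\<in>OtplusL. l = (\<lambda>x. N *v x) ` vec.span {e0} \<or> l = (\<lambda>x. N *v x) ` vec.span {w1}"
proof -
  obtain v where v: "v \<noteq> 0" "l = vec.span {v}" using tiso1_basis[OF assms] by blast
  have vv: "lform v v = 0" using assms v by (auto simp: tiso_def vec.span_base)
  obtain s where s: "s \<noteq> 0" "s *s v \<in> latL" using scale_latL by blast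
  define u where "u = s *s v"
  have u0: "u \<noteq> 0" using s v by (simp add: u_def vec_eq_iff)
  have lu: "l = vec.span {u}" using v(2) span_scale1[OF s(1), of v] by (simp add: u_def)
  obtain a b c d p q where uiv: "u = iv a b c d p q" using latL_iv s u_def by blast
  have "lform u u = 0" using vv by (simp add: u_def)
  then have iso: "a*b + c*d = 3*p^2 + q^2" using iv_iso uiv by simp
  obtain g where g: "reach u (of_int g *s e0) \<or> reach u (of_int g *s w1)"
    using line_int[OF iso] uiv iv_e0 iv_w1 by metis
  then obtain M t where M: "M \<in> OtplusL" "M *v u = of_int g *s t" "t = e0 \<or> t = w1"
    unfolding reach_def by blast
  have "M *v u \<noteq> 0" using inv_nz[OF OtplusL_OL[OF M(1)] u0] .
  then have g0: "(of_int g::rat) \<noteq> 0" using M(2) by auto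
  have "(\<lambda>x. M *v x) ` l = vec.span {M *v u}"
    using lu vec.span_image[of M "{u}"] by simp
  also have "\<dots> = vec.span {t}" using M(2) span_scale1[OF g0] by simp
  finally have img: "(\<lambda>x. M *v x) ` l = vec.span {t}" .
  obtain N where N: "N \<in> OtplusL" "M ** N = mat 1" "N ** M = mat 1" using grp_inv[OF grp_OtplusL M(1)] by blast
  have "l = (\<lambda>x. N *v x) ` vec.span {t}" using image_inv[OF N(3), of l] img by simp
  then show ?thesis using N(1) M(3) by blast
qed




definition typ0 :: "rat^6 \<Rightarrow> bool" where
  "typ0 u \<longleftrightarrow> (\<exists>M\<in>OtplusL. \<exists>g::int. g \<noteq> 0 \<and> M *v u = of_int g *s e0)"

definition typ1 :: "rat^6 \<Rightarrow> bool" where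
  "typ1 u \<longleftrightarrow> (\<exists>M\<in>OtplusL. \<exists>g::int. g \<noteq> 0 \<and> M *v u = of_int g *s w1)"

lemma typ01: assumes "u \<in> latL" "u \<noteq> 0" "lform u u = 0" shows "typ0 u \<or> typ1 u"
proof -
  obtain a b c d p q where uiv: "u = iv a b c d p q" using latL_iv assms(1) by blast
  have iso: "a*b + c*d = 3*p^2 + q^2" using iv_iso uiv assms(3) by simp
  obtain g where g: "reach u (of_int g *s e0) \<or> reach u (of_int g *s w1)"
    using line_int[OF iso] uiv iv_e0 iv_w1 by metis
  then obtain M t where M: "M \<in> OtplusL" "M *v u = of_int g *s t" "t = e0 \<or> t = w1"
    unfolding reach_def by blast
  have "M *v u \<noteq> 0" using inv_nz[OF OtplusL_OL[OF M(1)] assms(2)] .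
  then have g0: "g \<noteq> 0" using M(2) by auto
  then show ?thesis using M unfolding typ0_def typ1_def by blast
qed

lemma par_int: assumes "even a" "even b" "even c" "even d" "a*b + c*d = 3*p^2 + (q::int)^2"
  "\<not> (even p \<and> even q)" shows "odd p \<and> odd q"
proof -
  have e: "even (a*b + c*d)" using assms(1-4) by simp
  have 1: "even q" if "even p"
  proof -
    have "even (a*b + c*d - 3*p^2)" using e that by simp
    moreover have "q^2 = a*b + c*d - 3*p^2" using assms(5) by simp
    ultimately have "even (q^2)" by metis
    then show ?thesis by simp
  qed
  have 2: "even p" if "even q"
  proof -
    have "even (a*b + c*d - q^2)" using e that by simp
    moreover have "3*p^2 = a*b + c*d - q^2" using assms(5) by simp
    ultimately have "even (3*p^2)" by metis
    then show ?thesis by simp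
  qed
  show ?thesis using 1 2 assms(6) by blast
qed

lemma half_Int_even: "(of_int a::rat) / 2 \<in> \<int> \<Longrightarrow> even a"
proof -
  assume "(of_int a::rat) / 2 \<in> \<int>"
  then obtain n where "(of_int a::rat) / 2 = of_int n" by (auto elim: Ints_cases)
  then have "(of_int a::rat) = of_int (2*n)" by (simp add: field_simps)
  then have "a = 2*n" by (simp only: of_int_eq_iff)
  then show ?thesis by simp
qed

lemma even_half_Int: "even a \<Longrightarrow> (of_int a::rat) / 2 \<in> \<int>"
  by (auto elim!: evenE)

lemma even_half_Int2: "even a \<Longrightarrow> (of_int a - 2::rat) / 2 \<in> \<int>"
proof -
  assume "even a"
  then obtain k where "a = 2*k" by (auto elim!: evenE)
  then have "(of_int a - 2::rat) / 2 = of_int (k - 1)" by (simp add: field_simps)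
  then show ?thesis by (metis Ints_of_int)
qed

lemma odd_half_Int: "odd a \<Longrightarrow> (of_int a - 1::rat) / 2 \<in> \<int>"
proof -
  assume "odd a"
  then obtain k where "a = 2*k + 1" by (auto elim!: oddE)
  then show ?thesis by simp
qed

lemma typ1_par:
  assumes M: "M \<in> OtplusL" and g: "g \<noteq> 0" and Mu: "M *v u = of_int g *s w1"
  shows "\<exists>u'. u' \<in> latL \<and> u = of_int g *s u' \<and> (1/2) *s (u' - w1) \<in> latL \<and> lform u' u' = 0"
proof -
  have MO: "M \<in> OL" using OtplusL_OL[OF M] .
  obtain N where N: "N \<in> OL" "M ** N = mat 1" "N ** M = mat 1" using OL_inv[OF MO] by blast
  define u' where "u' = N *v w1"
  have w1L: "w1 \<in> latL" by (simp add: v6_latL)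
  have u'L: "u' \<in> latL" unfolding u'_def using OL_int[OF N(1) w1L] .
  have uu: "u = of_int g *s u'"
  proof -
    have "u = N *v (M *v u)" by (simp add: matrix_vector_mul_assoc N(3))
    also have "\<dots> = N *v (of_int g *s w1)" by (simp only: Mu)
    also have "\<dots> = of_int g *s (N *v w1)" by (rule mv_scale)
    finally show ?thesis by (simp only: u'_def)
  qed
  have Mu': "M *v u' = w1" by (simp add: u'_def matrix_vector_mul_assoc N(2))
  have iso: "lform u' u' = 0" using OL_iso[OF MO, of u' u'] Mu' by simp
  have ev: "lform u' y / 2 \<in> \<int>" if "y \<in> latL" for y
  proof -
    have "lform u' y = lform (M *v u') (M *v y)" using OL_iso[OF MO] by simp
    also have "\<dots> = lform w1 (M *v y)" by (simp add: Mu')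
    finally have e: "lform u' y / 2 = (M *v y)$3 + (M *v y)$2 - 3 * (M *v y)$4 - (M *v y)$5"
      by (simp add: lform_def)
    have "M *v y \<in> latL" using OL_int[OF MO that] .
    then have "(M *v y)$3 + (M *v y)$2 - 3 * (M *v y)$4 - (M *v y)$5 \<in> \<int>"
      by (intro Ints_diff Ints_add Ints_mult) (auto simp: latL_iff)
    then show ?thesis by (simp only: e)
  qed
  obtain a b c d p q where uiv: "u' = iv a b c d p q" using latL_iv u'L by blast
  have "lform u' (axis 1 1) = u'$0" "lform u' (axis 0 1) = u'$1"
       "lform u' (axis 3 1) = u'$2" "lform u' (axis 2 1) = u'$3" by (simp_all add: lform_def axis_def)
  then have h: "u'$0 / 2 \<in> \<int>" "u'$1 / 2 \<in> \<int>" "u'$2 / 2 \<in> \<int>" "u'$3 / 2 \<in> \<int>"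
    using ev latL_axis by metis+
  then have evs: "even a" "even b" "even c" "even d" using half_Int_even by (auto simp: uiv iv_def)
  have isoi: "a*b + c*d = 3*p^2 + q^2" using iv_iso iso uiv by simp
  have "\<not> (even p \<and> even q)"
  proof
    assume pq: "even p \<and> even q"
    have "(1/2) *s u' \<in> latL" using evs pq by (auto simp: uiv iv_def latL_iff intro: even_half_Int)
    then have "M *v ((1/2) *s u') \<in> latL" using OL_int[OF MO] by blast
    then have "(1/2) *s w1 \<in> latL" by (simp add: mv_scale Mu')
    then show False using half_not_Int by (simp add: latL_iff)
  qed
  then have "odd p \<and> odd q" using par_int[OF evs isoi] by blast
  then have "(1/2) *s (u' - w1) \<in> latL"
    using evs by (auto simp: uiv iv_def latL_iff intro: even_half_Int odd_half_Int even_half_Int2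
       simp del: of_int_diff)
  then show ?thesis using u'L uu iso by blast
qed




definition Dm :: "6 \<Rightarrow> 6 \<Rightarrow> rat^6 \<Rightarrow> rat^6 \<Rightarrow> rat" where
  "Dm i j x y = x$i * y$j - x$j * y$i"

lemma minor: assumes "u \<noteq> 0" "y \<notin> vec.span {u}" shows "\<exists>i j. Dm i j u y \<noteq> 0"
proof (rule ccontr)
  assume "\<not> ?thesis"
  then have D: "\<And>i j. u$i * y$j = u$j * y$i" by (auto simp: Dm_def)
  obtain i where i: "u$i \<noteq> 0" using assms(1) by (auto simp: vec_eq_iff)
  have "y = (y$i / u$i) *s u"
  proof (rule iffD2[OF vec_eq_iff], rule allI)
    fix j
    have "u$i * y$j = u$j * y$i" by (rule D)
    then show "y$j = ((y$i / u$i) *s u)$j" using i by (simp add: field_simps)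
  qed
  then have "y \<in> vec.span {u}" by (metis vec.span_base vec.span_scale singletonI)
  then show False using assms(2) by blast
qed

lemma Dm_Int: "x \<in> latL \<Longrightarrow> y \<in> latL \<Longrightarrow> Dm i j x y \<in> \<int>"
  by (simp add: Dm_def latL_def)

lemma Int_abs_lt1: "(r::rat) \<in> \<int> \<Longrightarrow> \<bar>r\<bar> < 1 \<Longrightarrow> r = 0"
  by (auto elim!: Ints_cases)

lemma desc:
  assumes sub: "vec.subspace P" and iso: "\<forall>x\<in>P. \<forall>y\<in>P. lform x y = 0"
    and no0: "\<forall>z\<in>P. z \<in> latL \<longrightarrow> z \<noteq> 0 \<longrightarrow> \<not> typ0 z"
    and u1: "u1 \<in> P" "u1 \<in> latL" "(1/2) *s (u1 - w1) \<in> latL"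
  shows "\<forall>y. y \<in> P \<longrightarrow> y \<in> latL \<longrightarrow> \<bar>Dm i j u1 y\<bar> < of_nat n \<longrightarrow> Dm i j u1 y = 0"
proof (induct n)
  case 0 then show ?case by simp
next
  case (Suc n)
  show ?case
  proof (intro allI impI, rule ccontr)
    fix y assume y: "y \<in> P" "y \<in> latL" "\<bar>Dm i j u1 y\<bar> < of_nat (Suc n)" and D: "Dm i j u1 y \<noteq> 0"
    have y0: "y \<noteq> 0" using D by (auto simp: Dm_def)
    have "typ0 y \<or> typ1 y" using typ01[OF y(2) y0] iso y(1) by blast
    then have "typ1 y" using no0 y y0 by blast
    then obtain M g where M: "M \<in> OtplusL" "g \<noteq> 0" "M *v y = of_int g *s w1" by (auto simp: typ1_def)
    obtain u2 where u2: "u2 \<in> latL" "y = of_int g *s u2" "(1/2) *s (u2 - w1) \<in> latL"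
      using typ1_par[OF M] by blast
    have g0: "(of_int g :: rat) \<noteq> 0" using M(2) by simp
    have "u2 = (1 / of_int g) *s y" using u2(2) g0 by (simp add: vector_smult_assoc)
    then have u2P: "u2 \<in> P" using vec.subspace_scale[OF sub y(1)] by simp
    define z where "z = (1/2) *s (u1 - u2)"
    have ez: "z = (1/2) *s (u1 - w1) - (1/2) *s (u2 - w1)" by (simp add: z_def vec_eq_iff algebra_simps)
    have zL: "z \<in> latL" unfolding ez by (rule latL_diff[OF u1(3) u2(3)])
    have zP: "z \<in> P" unfolding z_def by (intro vec.subspace_scale[OF sub] vec.subspace_diff[OF sub] u1 u2P)
    have Dy: "Dm i j u1 y = - 2 * of_int g * Dm i j u1 z"
      using u2(2) by (simp add: Dm_def z_def algebra_simps)
    have DzI: "Dm i j u1 z \<in> \<int>" using Dm_Int[OF u1(2) zL] .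
    have DyI: "Dm i j u1 y \<in> \<int>" using Dm_Int[OF u1(2) y(2)] .
    show False
    proof (cases "n = 0")
      case True
      then show False using Int_abs_lt1[OF DyI] y(3) D by simp
    next
      case False
      have ag: "(1::rat) \<le> \<bar>of_int g\<bar>" using M(2) by (simp del: of_int_abs add: of_int_abs[symmetric])
      have "\<bar>Dm i j u1 y\<bar> = 2 * \<bar>of_int g\<bar> * \<bar>Dm i j u1 z\<bar>" by (simp add: Dy abs_mult)
      moreover have "2 * \<bar>Dm i j u1 z\<bar> \<le> 2 * \<bar>of_int g\<bar> * \<bar>Dm i j u1 z\<bar>"
        using ag by (simp add: mult_right_mono)
      ultimately have "2 * \<bar>Dm i j u1 z\<bar> < of_nat (Suc n)" using y(3) by linarith
      then have "\<bar>Dm i j u1 z\<bar> < of_nat n" using False by simp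
      then have "Dm i j u1 z = 0" using Suc zP zL by blast
      then show False using Dy D by simp
    qed
  qed
qed

lemma exists_typ0: assumes t: "tiso 2 P" shows "\<exists>z\<in>P. z \<in> latL \<and> z \<noteq> 0 \<and> typ0 z"
proof (rule ccontr)
  assume "\<not> ?thesis"
  then have no0: "\<forall>z\<in>P. z \<in> latL \<longrightarrow> z \<noteq> 0 \<longrightarrow> \<not> typ0 z" by blast
  have sub: "vec.subspace P" and d2: "vec.dim P = 2" and iso: "\<forall>x\<in>P. \<forall>y\<in>P. lform x y = 0"
    using t by (auto simp: tiso_def)
  obtain x y where xy: "vec.independent {x, y}" "x \<noteq> y" "P = vec.span {x, y}" using tiso2_basis[OF t] by blast
  have x0: "x \<noteq> 0" using xy(1) vec.dependent_zero by blast
  have xP: "x \<in> P" using xy(3) by (simp add: vec.span_base)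
  obtain s where s: "s \<noteq> 0" "s *s x \<in> latL" using scale_latL by blast
  have sx0: "s *s x \<noteq> 0" using s x0 by (simp add: vec_eq_iff)
  have sxP: "s *s x \<in> P" using vec.subspace_scale[OF sub xP] .
  have "typ0 (s *s x) \<or> typ1 (s *s x)" using typ01[OF s(2) sx0] iso sxP by blast
  then have "typ1 (s *s x)" using no0 sxP s sx0 by blast
  then obtain M g where M: "M \<in> OtplusL" "g \<noteq> 0" "M *v (s *s x) = of_int g *s w1" by (auto simp: typ1_def)
  obtain u1 where u1: "u1 \<in> latL" "s *s x = of_int g *s u1" "(1/2) *s (u1 - w1) \<in> latL"
    using typ1_par[OF M] by blast
  have g0: "(of_int g :: rat) \<noteq> 0" using M(2) by simp
  have eu: "u1 = (1 / of_int g) *s (s *s x)" using u1(2) g0 by (simp add: vector_smult_assoc)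
  have "(1 / of_int g) *s (s *s x) \<in> P" by (rule vec.subspace_scale[OF sub sxP])
  then have u1P: "u1 \<in> P" by (simp only: eu)
  have u10: "u1 \<noteq> 0" using u1(2) sx0 by auto
  have "\<exists>y0\<in>P. y0 \<notin> vec.span {u1}"
  proof (rule ccontr)
    assume "\<not> ?thesis"
    then have "P \<subseteq> vec.span {u1}" by blast
    then have "vec.dim P \<le> card {u1}" by (rule vec.dim_le_card) simp
    then show False using d2 by simp
  qed
  then obtain y0 where y0: "y0 \<in> P" "y0 \<notin> vec.span {u1}" by blast
  obtain s' where s': "s' \<noteq> 0" "s' *s y0 \<in> latL" using scale_latL by blast
  have y'P: "s' *s y0 \<in> P" using vec.subspace_scale[OF sub y0(1)] .
  have "s' *s y0 \<notin> vec.span {u1}"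
  proof
    assume "s' *s y0 \<in> vec.span {u1}"
    then have "(1/s') *s (s' *s y0) \<in> vec.span {u1}" by (rule vec.span_scale)
    then show False using y0(2) s'(1) by (simp add: vector_smult_assoc)
  qed
  then obtain i j where D: "Dm i j u1 (s' *s y0) \<noteq> 0" using minor[OF u10] by blast
  have "\<bar>Dm i j u1 (s' *s y0)\<bar> < of_nat (nat \<lceil>\<bar>Dm i j u1 (s' *s y0)\<bar>\<rceil> + 1)"
    by (simp add: of_nat_nat) linarith
  then have "Dm i j u1 (s' *s y0) = 0"
    using desc[OF sub iso no0 u1P u1(1) u1(3)] y'P s'(2) by blast
  then show False using D by simp
qed




lemma span_scale2': "s \<noteq> 0 \<Longrightarrow> vec.span {s *s a, v} = vec.span {a, v}"
  using span_scale2[of s v a] by (simp add: insert_commute)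

lemma plane_class: assumes t: "tiso 2 P"
  shows "\<exists>N\<in>OtplusL. P = (\<lambda>x. N *v x) ` vec.span {e0, e2} \<or> P = (\<lambda>x. N *v x) ` vec.span {e0, w1}"
proof -
  have sub: "vec.subspace P" and d2: "vec.dim P = 2" and iso: "\<forall>x\<in>P. \<forall>y\<in>P. lform x y = 0"
    using t by (auto simp: tiso_def)
  obtain z where z: "z \<in> P" "z \<in> latL" "z \<noteq> 0" "typ0 z" using exists_typ0[OF t] by blast
  obtain M g where M: "M \<in> OtplusL" "g \<noteq> 0" "M *v z = of_int g *s e0" using z(4) by (auto simp: typ0_def)
  have MO: "M \<in> OL" using OtplusL_OL[OF M(1)] .
  obtain Mi where Mi: "Mi \<in> OL" "M ** Mi = mat 1" "Mi ** M = mat 1" using OL_inv[OF MO] by blast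
  have g0: "(of_int g :: rat) \<noteq> 0" using M(2) by simp
  have "\<exists>y\<in>P. y \<notin> vec.span {z}"
  proof (rule ccontr)
    assume "\<not> ?thesis"
    then have "P \<subseteq> vec.span {z}" by blast
    then have "vec.dim P \<le> card {z}" by (rule vec.dim_le_card) simp
    then show False using d2 by simp
  qed
  then obtain y where y: "y \<in> P" "y \<notin> vec.span {z}" by blast
  have yz: "y \<noteq> z" using y(2) vec.span_base by blast
  have ind: "vec.independent {y, z}" using y(2) yz z(3) by (simp add: vec.independent_insert indep1)
  have "P \<subseteq> vec.span {y, z}"
    by (rule vec.card_ge_dim_independent) (use y z ind d2 yz in auto)
  moreover have "vec.span {y, z} \<subseteq> P" by (rule vec.span_minimal) (use y z sub in auto)
  ultimately have Pyz: "P = vec.span {y, z}" by blast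
  define w where "w = M *v y"
  have "(\<lambda>x. M *v x) ` P = vec.span {w, of_int g *s e0}"
    unfolding Pyz using vec.span_image[of M "{y, z}"] M(3) by (simp add: w_def)
  also have "\<dots> = vec.span {e0, w}" using span_scale2'[OF g0, of e0 w] by (simp add: insert_commute)
  finally have img1: "(\<lambda>x. M *v x) ` P = vec.span {e0, w}" .
  have "lform w (M *v z) = lform y z" unfolding w_def by (rule OL_iso[OF MO])
  then have "lform w (M *v z) = 0" using iso y(1) z(1) by simp
  then have "lform w (of_int g *s e0) = 0" by (simp only: M(3))
  then have "of_int g * lform w e0 = 0" by (simp only: lform_smult2)
  then have "lform w e0 = 0" using g0 by simp
  then have w1z: "w$1 = 0" by (simp add: lform_def)
  have ww: "lform w w = 0" unfolding w_def using OL_iso[OF MO] iso y(1) by simp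
  define w' where "w' = w - (w$0) *s e0"
  have sp2: "vec.span {e0, w'} = vec.span {e0, w}" unfolding w'_def by (rule span_shift2)
  have w'0: "w' \<noteq> 0"
  proof
    assume "w' = 0"
    then have "w = (w$0 / of_int g) *s (M *v z)" using g0 by (simp add: w'_def M(3) vector_smult_assoc)
    then have "M *v y = M *v ((w$0 / of_int g) *s z)" by (simp add: w_def mv_scale)
    then have "Mi *v (M *v y) = Mi *v (M *v ((w$0 / of_int g) *s z))" by simp
    then have "y = (w$0 / of_int g) *s z" by (simp add: matrix_vector_mul_assoc Mi(3))
    then have "y \<in> vec.span {z}" by (metis vec.span_base vec.span_scale singletonI)
    then show False using y(2) by blast
  qed
  have w'c: "w'$0 = 0" "w'$1 = 0" using w1z by (simp_all add: w'_def)
  have w'w': "lform w' w' = 0" using ww w1z by (simp add: lform_def w'_def)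
  obtain s where s: "s \<noteq> 0" "s *s w' \<in> latL" using scale_latL by blast
  define w'' where "w'' = s *s w'"
  have sp3: "vec.span {e0, w''} = vec.span {e0, w'}" unfolding w''_def by (rule span_scale2[OF s(1)])
  have w''0: "w'' \<noteq> 0" using s(1) w'0 by (simp add: w''_def vec_eq_iff)
  obtain a b c d p q where wiv: "w'' = iv a b c d p q" using latL_iv s(2) w''_def by blast
  have h01: "w''$0 = 0" "w''$1 = 0" using w'c by (simp_all add: w''_def)
  have "(of_int a::rat) = 0" "(of_int b::rat) = 0" using h01 unfolding wiv by (simp_all add: iv_def)
  then have "a = 0" "b = 0" by simp_all
  have "lform w'' w'' = 0" using w'w' by (simp add: w''_def)
  then have isoc: "c*d = 3*p^2 + q^2" using iv_iso wiv \<open>a = 0\<close> \<open>b = 0\<close> by fastforce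
  obtain g' where g': "reach0 w'' (of_int g' *s e2) \<or> reach0 w'' (of_int g' *s w1)"
    using kdesc[OF isoc] wiv \<open>a = 0\<close> \<open>b = 0\<close> iv_e2 iv_w1 by metis
  then obtain M2 t where M2: "M2 \<in> OtplusL" "M2 *v w'' = of_int g' *s t" "M2 *v e0 = e0" "t = e2 \<or> t = w1"
    unfolding reach0_def by blast
  have "M2 *v w'' \<noteq> 0" using inv_nz[OF OtplusL_OL[OF M2(1)] w''0] .
  then have g'0: "(of_int g'::rat) \<noteq> 0" using M2(2) by auto
  have "(\<lambda>x. M2 *v x) ` vec.span {e0, w''} = vec.span {e0, of_int g' *s t}"
    using vec.span_image[of M2 "{e0, w''}"] M2(2,3) by simp
  also have "\<dots> = vec.span {e0, t}" by (rule span_scale2[OF g'0])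
  finally have img2: "(\<lambda>x. M2 *v x) ` vec.span {e0, w''} = vec.span {e0, t}" .
  have "(\<lambda>x. (M2 ** M) *v x) ` P = (\<lambda>x. M2 *v x) ` ((\<lambda>x. M *v x) ` P)"
    by (simp add: image_image matrix_vector_mul_assoc)
  also have "\<dots> = vec.span {e0, t}" using img1 sp2 sp3 img2 by simp
  finally have img: "(\<lambda>x. (M2 ** M) *v x) ` P = vec.span {e0, t}" .
  have K: "M2 ** M \<in> OtplusL" using OtplusL_mult M2(1) M(1) by blast
  obtain N where N: "N \<in> OtplusL" "(M2 ** M) ** N = mat 1" "N ** (M2 ** M) = mat 1"
    using grp_inv[OF grp_OtplusL K] by blast
  have "P = (\<lambda>x. N *v x) ` vec.span {e0, t}" using image_inv[OF N(3), of P] img by simp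
  then show ?thesis using N(1) M2(4) by blast
qed

theorem mainTheorem10:
  assumes "G = OtplusL \<or> G = OplusL"
  shows "\<exists>l0 l1 P0 P1.
           tiso 1 l0 \<and> tiso 1 l1 \<and> tiso 2 P0 \<and> tiso 2 P1
         \<and> {orbit G l | l. tiso 1 l} = {orbit G l0, orbit G l1}
         \<and> orbit G l0 \<noteq> orbit G l1
         \<and> {orbit G P | P. tiso 2 P} = {orbit G P0, orbit G P1}
         \<and> orbit G P0 \<noteq> orbit G P1
         \<and> bedge G l0 P0 \<and> bedge G l0 P1 \<and> bedge G l1 P1 \<and> \<not> bedge G l1 P0"
proof -
  have gG: "grp G" using assms grp_OtplusL grp_OplusL by blast
  have sub: "OtplusL \<subseteq> G" using assms Ot_sub_O by blast
  have GO: "G \<subseteq> OL" using gG by (simp add: grp_def)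
  have one: "mat 1 \<in> G" using gG by (simp add: grp_def)
  define l0 l1 P0 P1 where "l0 = vec.span {e0}" "l1 = vec.span {w1}"
    "P0 = vec.span {e0, e2}" "P1 = vec.span {e0, w1}"
  note defs = l0_l1_P0_P1_def
  have noinP0: "M *v w1 \<notin> P0" if "M \<in> G" for M using key GO that defs by blast
  have inv_not: False if a: "M \<in> G" "M *v x = w1" "x \<in> P0" for M x
  proof -
    obtain N where N: "N \<in> G" "M ** N = mat 1" "N ** M = mat 1" using grp_inv[OF gG a(1)] by blast
    have "x = N *v w1" using a(2) by (metis N(3) matrix_vector_mul_assoc matrix_vector_mul_lid)
    then show False using noinP0[OF N(1)] a(3) by simp
  qed
  have l0P0: "l0 \<subseteq> P0" "l0 \<subseteq> P1" "l1 \<subseteq> P1" unfolding defs by (rule vec.span_mono; auto)+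
  have A: "{orbit G l | l. tiso 1 l} = {orbit G l0, orbit G l1}"
  proof
    show "{orbit G l | l. tiso 1 l} \<subseteq> {orbit G l0, orbit G l1}"
    proof
      fix Ob assume "Ob \<in> {orbit G l | l. tiso 1 l}"
      then obtain l where l: "Ob = orbit G l" "tiso 1 l" by blast
      obtain N where "N \<in> OtplusL" "l = (\<lambda>x. N *v x) ` l0 \<or> l = (\<lambda>x. N *v x) ` l1"
        using line_class[OF l(2)] defs by blast
      then show "Ob \<in> {orbit G l0, orbit G l1}" using orbit_img[OF gG] sub l(1) by blast
    qed
  next
    show "{orbit G l0, orbit G l1} \<subseteq> {orbit G l | l. tiso 1 l}"
      using tiso_l0 tiso_l1 defs by blast
  qed
  have B: "{orbit G P | P. tiso 2 P} = {orbit G P0, orbit G P1}"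
  proof
    show "{orbit G P | P. tiso 2 P} \<subseteq> {orbit G P0, orbit G P1}"
    proof
      fix Ob assume "Ob \<in> {orbit G P | P. tiso 2 P}"
      then obtain P where P: "Ob = orbit G P" "tiso 2 P" by blast
      obtain N where "N \<in> OtplusL" "P = (\<lambda>x. N *v x) ` P0 \<or> P = (\<lambda>x. N *v x) ` P1"
        using plane_class[OF P(2)] defs by blast
      then show "Ob \<in> {orbit G P0, orbit G P1}" using orbit_img[OF gG] sub P(1) by blast
    qed
  next
    show "{orbit G P0, orbit G P1} \<subseteq> {orbit G P | P. tiso 2 P}"
      using tiso_P0 tiso_P1 defs by blast
  qed
  have w1l1: "w1 \<in> l1" "w1 \<in> P1" unfolding defs by (simp_all add: vec.span_base)
  have C: "orbit G l0 \<noteq> orbit G l1"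
  proof
    assume "orbit G l0 = orbit G l1"
    then have "l1 \<in> orbit G l0" using orbit_self[OF gG] by simp
    then obtain M where M: "M \<in> G" "l1 = (\<lambda>x. M *v x) ` l0" by (auto simp: orbit_def)
    then obtain x where "x \<in> l0" "M *v x = w1" using w1l1 by auto
    then show False using inv_not M l0P0 by blast
  qed
  have D: "orbit G P0 \<noteq> orbit G P1"
  proof
    assume "orbit G P0 = orbit G P1"
    then have "P1 \<in> orbit G P0" using orbit_self[OF gG] by simp
    then obtain M where M: "M \<in> G" "P1 = (\<lambda>x. M *v x) ` P0" by (auto simp: orbit_def)
    then obtain x where "x \<in> P0" "M *v x = w1" using w1l1 by auto
    then show False using inv_not M by blast
  qed
  have E: "bedge G l0 P0" "bedge G l0 P1" "bedge G l1 P1"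
    unfolding bedge_def using one l0P0 by (auto intro!: bexI[of _ "mat 1"])
  have F: "\<not> bedge G l1 P0"
  proof
    assume "bedge G l1 P0"
    then obtain M where "M \<in> G" "(\<lambda>x. M *v x) ` l1 \<subseteq> P0" by (auto simp: bedge_def)
    then show False using noinP0 w1l1 by blast
  qed
  show ?thesis
    apply (rule exI[of _ l0], rule exI[of _ l1], rule exI[of _ P0], rule exI[of _ P1])
    using A B C D E F tiso_l0 tiso_l1 tiso_P0 tiso_P1 defs by simp
qed


end
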